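(* Let $n \ge 1$ and let $m$ be an even positive integer such that $\Delta_{n,m} \neq \emptyset$. Then there does not exist a finite set $\mathcal{H} = \{h_1,\dots,h_N\}$ of non-zero real forms in $n$ variables with the property that for every $p \in P_{n,m}$ there is some $h_k \in \mathcal{H}$ with $h_k p$ a sum of squares.
   Context: $H_d(\mathbb{R}^n)$ denotes the real vector space of real homogeneous forms of degree $d$ in $n$ variables $x_1,\dots,x_n$. For even $m$, $P_{n,m}$ is the set of forms $p \in H_m(\mathbb{R}^n)$ that are positive semidefinite (psd), i.e. $p(x) \ge 0$ for all $x \in \mathbb{R}^n$. A form is a sum of squares (sos) if it can be written as $\sum_k g_k^2$ with each $g_k$ a real polynomial. $\Sigma_{n,m} \subseteq P_{n,m}$ is the set of sos forms in $H_m(\mathbb{R}^n)$, and $\Delta_{n,m} = P_{n,m} \setminus \Sigma_{n,m}$. *)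

theory Defs
  imports Complex_Main
begin

text \<open>Real polynomials in the n variables x_0,...,x_{n-1}, represented by the
  polynomial functions they induce on points x :: nat => real (only the first n
  coordinates matter). Over the reals a polynomial is determined by its function,
  so this is faithful.\<close>

definition exps :: "nat \<Rightarrow> (nat \<Rightarrow> nat) set" where
  "exps n = {\<alpha>. \<forall>i\<ge>n. \<alpha> i = 0}"

definition monom :: "nat \<Rightarrow> (nat \<Rightarrow> nat) \<Rightarrow> (nat \<Rightarrow> real) \<Rightarrow> real" where
  "monom n \<alpha> x = (\<Prod>i<n. x i ^ \<alpha> i)"

definition is_poly :: "nat \<Rightarrow> ((nat \<Rightarrow> real) \<Rightarrow> real) \<Rightarrow> bool" where
  "is_poly n f \<longleftrightarrow> (\<exists>A c. finite A \<and> A \<subseteq> exps n \<and>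
      f = (\<lambda>x. \<Sum>\<alpha>\<in>A. c \<alpha> * monom n \<alpha> x))"

definition is_form :: "nat \<Rightarrow> nat \<Rightarrow> ((nat \<Rightarrow> real) \<Rightarrow> real) \<Rightarrow> bool" where
  "is_form n d f \<longleftrightarrow> (\<exists>A c. finite A \<and> A \<subseteq> {\<alpha> \<in> exps n. (\<Sum>i<n. \<alpha> i) = d} \<and>
      f = (\<lambda>x. \<Sum>\<alpha>\<in>A. c \<alpha> * monom n \<alpha> x))"

definition P_set :: "nat \<Rightarrow> nat \<Rightarrow> ((nat \<Rightarrow> real) \<Rightarrow> real) set" where
  "P_set n m = {p. is_form n m p \<and> (\<forall>x. p x \<ge> 0)}"

definition is_sos :: "nat \<Rightarrow> ((nat \<Rightarrow> real) \<Rightarrow> real) \<Rightarrow> bool" where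
  "is_sos n f \<longleftrightarrow> (\<exists>gs. (\<forall>g\<in>set gs. is_poly n g) \<and> f = (\<lambda>x. \<Sum>g\<leftarrow>gs. (g x)^2))"

definition Sigma_set :: "nat \<Rightarrow> nat \<Rightarrow> ((nat \<Rightarrow> real) \<Rightarrow> real) set" where
  "Sigma_set n m = {p. is_form n m p \<and> is_sos n p}"

definition Delta_set :: "nat \<Rightarrow> nat \<Rightarrow> ((nat \<Rightarrow> real) \<Rightarrow> real) set" where
  "Delta_set n m = P_set n m - Sigma_set n m"

end

theory Submission
  imports Defs "HOL-Computational_Algebra.Polynomial" "HOL-Library.FuncSet"
begin

definition polyb :: "nat \<Rightarrow> nat \<Rightarrow> ((nat \<Rightarrow> real) \<Rightarrow> real) \<Rightarrow> bool" where
  "polyb n D f \<longleftrightarrow> (\<exists>A c. finite A \<and> (\<forall>\<alpha>\<in>A. \<alpha> \<in> exps n \<and> (\<forall>i. \<alpha> i \<le> D)) \<and>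
      f = (\<lambda>x. \<Sum>\<alpha>\<in>A. c \<alpha> * Defs.monom n \<alpha> x))"

definition linedeg :: "nat \<Rightarrow> nat \<Rightarrow> ((nat \<Rightarrow> real) \<Rightarrow> real) \<Rightarrow> bool" where
  "linedeg n D f \<longleftrightarrow> (\<forall>x i. i < n \<longrightarrow> (\<exists>q. degree q \<le> D \<and> (\<forall>t. f (x(i:=t)) = poly q t)))"

definition loc :: "nat \<Rightarrow> ((nat \<Rightarrow> real) \<Rightarrow> real) \<Rightarrow> bool" where
  "loc n f \<longleftrightarrow> (\<forall>x y. (\<forall>i<n. x i = y i) \<longrightarrow> f x = f y)"

lemma polyb_mono: "polyb n D f \<Longrightarrow> D \<le> E \<Longrightarrow> polyb n E f"
  unfolding polyb_def
  apply (elim exE conjE)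
  subgoal for A c by (rule exI[of _ A], rule exI[of _ c]) (auto intro: order_trans)
  done

lemma is_poly_iff: "is_poly n f \<longleftrightarrow> (\<exists>D. polyb n D f)"
proof
  assume "is_poly n f"
  then obtain A c where A: "finite A" "A \<subseteq> exps n" "f = (\<lambda>x. \<Sum>\<alpha>\<in>A. c \<alpha> * Defs.monom n \<alpha> x)"
    unfolding is_poly_def by blast
  define D where "D = (\<Sum>\<alpha>\<in>A. \<Sum>i<n. \<alpha> i)"
  have "\<forall>\<alpha>\<in>A. \<forall>i. \<alpha> i \<le> D"
  proof (intro ballI allI)
    fix \<alpha> i assume a: "\<alpha> \<in> A"
    show "\<alpha> i \<le> D"
    proof (cases "i < n")
      case True
      have "\<alpha> i \<le> (\<Sum>i<n. \<alpha> i)" using True by (intro member_le_sum) auto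
      also have "\<dots> \<le> D" unfolding D_def using a A(1) by (intro member_le_sum) auto
      finally show ?thesis .
    next
      case False then show ?thesis using a A(2) by (auto simp: exps_def)
    qed
  qed
  then show "\<exists>D. polyb n D f" unfolding polyb_def using A by blast
next
  assume "\<exists>D. polyb n D f" then show "is_poly n f"
    unfolding polyb_def is_poly_def by blast
qed

lemma form_polyb: "is_form n d f \<Longrightarrow> polyb n d f"
proof -
  assume "is_form n d f"
  then obtain A c where A: "finite A" "A \<subseteq> {\<alpha> \<in> exps n. (\<Sum>i<n. \<alpha> i) = d}" "f = (\<lambda>x. \<Sum>\<alpha>\<in>A. c \<alpha> * Defs.monom n \<alpha> x)"
    unfolding is_form_def by blast
  have "\<forall>\<alpha>\<in>A. \<forall>i. \<alpha> i \<le> d"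
  proof (intro ballI allI)
    fix \<alpha> i assume a: "\<alpha> \<in> A"
    show "\<alpha> i \<le> d"
    proof (cases "i < n")
      case True
      have "\<alpha> i \<le> (\<Sum>i<n. \<alpha> i)" using True by (intro member_le_sum) auto
      then show ?thesis using a A(2) by auto
    next
      case False then show ?thesis using a A(2) by (auto simp: exps_def)
    qed
  qed
  then show ?thesis unfolding polyb_def using A by blast
qed

lemma polyb_const: "polyb n 0 (\<lambda>x. a)"
  unfolding polyb_def
  by (rule exI[of _ "{\<lambda>_. 0}"], rule exI[of _ "\<lambda>_. a"]) (auto simp: exps_def Defs.monom_def)

lemma polyb_var: "i < n \<Longrightarrow> polyb n 1 (\<lambda>x. x i)"
  unfolding polyb_def
proof (rule exI[of _ "{\<lambda>j. if j = i then 1 else 0}"], rule exI[of _ "\<lambda>_. 1"], intro conjI)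
  assume i: "i < n"
  have "\<And>x. Defs.monom n (\<lambda>j. if j = i then 1 else 0) x = x i"
  proof -
    fix x :: "nat \<Rightarrow> real"
    have "Defs.monom n (\<lambda>j. if j = i then 1 else 0) x = (\<Prod>j<n. if j = i then x j else 1)"
      unfolding Defs.monom_def by (intro prod.cong) auto
    also have "\<dots> = x i" using i by (subst prod.delta) auto
    finally show "Defs.monom n (\<lambda>j. if j = i then 1 else 0) x = x i" .
  qed
  then show "(\<lambda>x. x i) = (\<lambda>x. \<Sum>\<alpha>\<in>{\<lambda>j. if j = i then 1 else 0}. 1 * Defs.monom n \<alpha> x)" by simp
qed (auto simp: exps_def)

lemma polyb_add:
  assumes "polyb n D f" "polyb n D g" shows "polyb n D (\<lambda>x. f x + g x)"
proof -
  obtain A c where A: "finite A" "\<forall>\<alpha>\<in>A. \<alpha> \<in> exps n \<and> (\<forall>i. \<alpha> i \<le> D)" "f = (\<lambda>x. \<Sum>\<alpha>\<in>A. c \<alpha> * Defs.monom n \<alpha> x)"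
    using assms(1) unfolding polyb_def by blast
  obtain B d where B: "finite B" "\<forall>\<alpha>\<in>B. \<alpha> \<in> exps n \<and> (\<forall>i. \<alpha> i \<le> D)" "g = (\<lambda>x. \<Sum>\<alpha>\<in>B. d \<alpha> * Defs.monom n \<alpha> x)"
    using assms(2) unfolding polyb_def by blast
  define e where "e \<alpha> = (if \<alpha> \<in> A then c \<alpha> else 0) + (if \<alpha> \<in> B then d \<alpha> else 0)" for \<alpha>
  have "\<And>x. f x + g x = (\<Sum>\<alpha>\<in>A\<union>B. e \<alpha> * Defs.monom n \<alpha> x)"
  proof -
    fix x
    have "(\<Sum>\<alpha>\<in>A\<union>B. e \<alpha> * Defs.monom n \<alpha> x) =
      (\<Sum>\<alpha>\<in>A\<union>B. (if \<alpha> \<in> A then c \<alpha> * Defs.monom n \<alpha> x else 0)) +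
      (\<Sum>\<alpha>\<in>A\<union>B. (if \<alpha> \<in> B then d \<alpha> * Defs.monom n \<alpha> x else 0))"
      unfolding sum.distrib[symmetric] by (intro sum.cong refl) (simp add: e_def distrib_right)
    also have "\<dots> = f x + g x"
      using A B by (simp add: sum.If_cases Int_absorb1 Int_absorb2)
    finally show "f x + g x = (\<Sum>\<alpha>\<in>A\<union>B. e \<alpha> * Defs.monom n \<alpha> x)" by simp
  qed
  then show ?thesis unfolding polyb_def using A B by (intro exI[of _ "A \<union> B"] exI[of _ e]) auto
qed

lemma polyb_scale: "polyb n D f \<Longrightarrow> polyb n D (\<lambda>x. a * f x)"
  unfolding polyb_def
  apply (elim exE conjE)
  subgoal for A c by (rule exI[of _ A], rule exI[of _ "\<lambda>\<alpha>. a * c \<alpha>"]) (auto simp: sum_distrib_left mult.assoc)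
  done

lemma monom_scale: "Defs.monom n \<alpha> (\<lambda>i. a i * x i) = (\<Prod>i<n. a i ^ \<alpha> i) * Defs.monom n \<alpha> x"
  unfolding Defs.monom_def by (simp add: power_mult_distrib prod.distrib)

lemma monom_add: "Defs.monom n (\<lambda>i. \<alpha> i + \<beta> i) x = Defs.monom n \<alpha> x * Defs.monom n \<beta> x"
  unfolding Defs.monom_def by (simp add: power_add prod.distrib)

lemma polyb_comp_scale: "polyb n D f \<Longrightarrow> polyb n D (\<lambda>x. f (\<lambda>i. a i * x i))"
  unfolding polyb_def
  apply (elim exE conjE)
  subgoal for A c by (rule exI[of _ A], rule exI[of _ "\<lambda>\<alpha>. c \<alpha> * (\<Prod>i<n. a i ^ \<alpha> i)"]) (auto simp: monom_scale mult.assoc)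
  done

lemma polyb_mult:
  assumes "polyb n D f" "polyb n E g" shows "polyb n (D + E) (\<lambda>x. f x * g x)"
proof -
  obtain A c where A: "finite A" "\<forall>\<alpha>\<in>A. \<alpha> \<in> exps n \<and> (\<forall>i. \<alpha> i \<le> D)" "f = (\<lambda>x. \<Sum>\<alpha>\<in>A. c \<alpha> * Defs.monom n \<alpha> x)"
    using assms(1) unfolding polyb_def by blast
  obtain B d where B: "finite B" "\<forall>\<alpha>\<in>B. \<alpha> \<in> exps n \<and> (\<forall>i. \<alpha> i \<le> E)" "g = (\<lambda>x. \<Sum>\<alpha>\<in>B. d \<alpha> * Defs.monom n \<alpha> x)"
    using assms(2) unfolding polyb_def by blast
  define pl where "pl = (\<lambda>(\<alpha>::nat\<Rightarrow>nat, \<beta>::nat\<Rightarrow>nat). \<lambda>i. \<alpha> i + \<beta> i)"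
  define C where "C = pl ` (A \<times> B)"
  define e where "e \<gamma> = (\<Sum>p\<in>{p \<in> A \<times> B. pl p = \<gamma>}. c (fst p) * d (snd p))" for \<gamma>
  have fin: "finite (A \<times> B)" using A B by auto
  have "\<And>x. f x * g x = (\<Sum>\<gamma>\<in>C. e \<gamma> * Defs.monom n \<gamma> x)"
  proof -
    fix x
    have "f x * g x = (\<Sum>p\<in>A \<times> B. c (fst p) * d (snd p) * Defs.monom n (pl p) x)"
      unfolding A(3) B(3) sum_product sum.cartesian_product
      by (intro sum.cong) (auto simp: pl_def monom_add)
    also have "\<dots> = (\<Sum>\<gamma>\<in>C. \<Sum>p\<in>{p \<in> A \<times> B. pl p = \<gamma>}. c (fst p) * d (snd p) * Defs.monom n (pl p) x)"
      unfolding C_def by (rule sum.image_gen[OF fin])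
    also have "\<dots> = (\<Sum>\<gamma>\<in>C. e \<gamma> * Defs.monom n \<gamma> x)"
      unfolding e_def sum_distrib_right by (intro sum.cong refl) auto
    finally show "f x * g x = (\<Sum>\<gamma>\<in>C. e \<gamma> * Defs.monom n \<gamma> x)" .
  qed
  moreover have "\<forall>\<gamma>\<in>C. \<gamma> \<in> exps n \<and> (\<forall>i. \<gamma> i \<le> D + E)"
    using A(2) B(2) unfolding C_def pl_def exps_def by (fastforce intro: add_mono)
  moreover have "finite C" unfolding C_def using fin by auto
  ultimately show ?thesis unfolding polyb_def by blast
qed

lemma polyb_sum: "finite S \<Longrightarrow> (\<And>s. s \<in> S \<Longrightarrow> polyb n D (f s)) \<Longrightarrow> polyb n D (\<lambda>x. \<Sum>s\<in>S. f s x)"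
proof (induction S rule: finite_induct)
  case empty then show ?case using polyb_mono[OF polyb_const[of n 0]] by simp
next
  case (insert a S) then show ?case by (simp add: polyb_add)
qed

lemma is_poly_const: "is_poly n (\<lambda>x. a)" using polyb_const is_poly_iff by blast
lemma is_poly_var: "i < n \<Longrightarrow> is_poly n (\<lambda>x. x i)" using polyb_var is_poly_iff by blast
lemma is_poly_add: "is_poly n f \<Longrightarrow> is_poly n g \<Longrightarrow> is_poly n (\<lambda>x. f x + g x)"
  unfolding is_poly_iff
proof (elim exE)
  fix D E assume "polyb n D f" "polyb n E g"
  then have "polyb n (max D E) f" "polyb n (max D E) g" by (auto intro: polyb_mono)
  then show "\<exists>D. polyb n D (\<lambda>x. f x + g x)" by (blast intro: polyb_add)
qed
lemma is_poly_mult: "is_poly n f \<Longrightarrow> is_poly n g \<Longrightarrow> is_poly n (\<lambda>x. f x * g x)"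
  unfolding is_poly_iff by (blast intro: polyb_mult)
lemma is_poly_scale: "is_poly n f \<Longrightarrow> is_poly n (\<lambda>x. a * f x)"
  unfolding is_poly_iff by (blast intro: polyb_scale)
lemma is_poly_comp_scale: "is_poly n f \<Longrightarrow> is_poly n (\<lambda>x. f (\<lambda>i. a i * x i))"
  unfolding is_poly_iff by (blast intro: polyb_comp_scale)
lemma is_poly_sum: "finite S \<Longrightarrow> (\<And>s. s \<in> S \<Longrightarrow> is_poly n (f s)) \<Longrightarrow> is_poly n (\<lambda>x. \<Sum>s\<in>S. f s x)"
proof (induction S rule: finite_induct)
  case empty then show ?case using is_poly_const[of n 0] by simp
next
  case (insert a S) then show ?case by (simp add: is_poly_add)
qed
lemma is_poly_prod: "finite S \<Longrightarrow> (\<And>s. s \<in> S \<Longrightarrow> is_poly n (f s)) \<Longrightarrow> is_poly n (\<lambda>x. \<Prod>s\<in>S. f s x)"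
proof (induction S rule: finite_induct)
  case empty then show ?case using is_poly_const[of n 1] by simp
next
  case (insert a S) then show ?case by (simp add: is_poly_mult)
qed
lemma is_poly_sum_list: "(\<And>g. g \<in> set gs \<Longrightarrow> is_poly n g) \<Longrightarrow> is_poly n (\<lambda>x. \<Sum>g\<leftarrow>gs. (g x)^2)"
proof (induction gs)
  case Nil then show ?case using is_poly_const[of n 0] by simp
next
  case (Cons g gs) then show ?case by (simp add: is_poly_add is_poly_mult power2_eq_square)
qed
lemma is_poly_univ: "i < n \<Longrightarrow> is_poly n (\<lambda>x. poly q (x i))"
proof (induction q)
  case (pCons a q)
  have "is_poly n (\<lambda>x. a + x i * poly q (x i))"
    using pCons by (intro is_poly_add is_poly_mult is_poly_const is_poly_var) auto
  then show ?case by simp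
qed (use is_poly_const[of n 0] in simp)

lemma monom_upd: "i < n \<Longrightarrow> Defs.monom n \<alpha> (x(i:=t)) = t ^ \<alpha> i * (\<Prod>j\<in>{..<n}-{i}. x j ^ \<alpha> j)"
  unfolding Defs.monom_def by (subst prod.remove[of _ i]) (auto intro!: prod.cong)

lemma polyb_linedeg: "polyb n D f \<Longrightarrow> linedeg n D f"
  unfolding linedeg_def
proof (intro allI impI)
  fix x i assume "polyb n D f" "i < n"
  then obtain A c where A: "finite A" "\<forall>\<alpha>\<in>A. \<alpha> \<in> exps n \<and> (\<forall>i. \<alpha> i \<le> D)" "f = (\<lambda>x. \<Sum>\<alpha>\<in>A. c \<alpha> * Defs.monom n \<alpha> x)"
    unfolding polyb_def by blast
  define q where "q = (\<Sum>\<alpha>\<in>A. Polynomial.monom (c \<alpha> * (\<Prod>j\<in>{..<n}-{i}. x j ^ \<alpha> j)) (\<alpha> i))"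
  have "degree q \<le> D" unfolding q_def using A
    by (intro degree_sum_le) (auto intro: order_trans[OF degree_monom_le])
  moreover have "\<forall>t. f (x(i:=t)) = poly q t"
    unfolding q_def A(3) using \<open>i < n\<close> by (auto simp: poly_sum poly_monom monom_upd intro!: sum.cong)
  ultimately show "\<exists>q. degree q \<le> D \<and> (\<forall>t. f (x(i:=t)) = poly q t)" by blast
qed

lemma polyb_loc: "polyb n D f \<Longrightarrow> loc n f"
  unfolding polyb_def loc_def Defs.monom_def by auto

lemma is_poly_loc: "is_poly n f \<Longrightarrow> loc n f"
  using polyb_loc is_poly_iff by blast

lemma is_poly_linepoly: "is_poly n f \<Longrightarrow> \<exists>D. linedeg n D f"
  using polyb_linedeg is_poly_iff by blast

lemma coeff_sum_list_map: "coeff (sum_list (map f xs)) k = sum_list (map (\<lambda>x. coeff (f x) k) xs)"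
  by (induction xs) auto

lemma sq_sum_degree:
  fixes qs :: "real poly list"
  assumes "q \<in> set qs"
  shows "2 * degree q \<le> degree (sum_list (map (\<lambda>q. q * q) qs))"
proof -
  define M where "M = Max (degree ` set qs)"
  have qM: "degree q \<le> M" unfolding M_def using assms by auto
  show ?thesis
  proof (cases "M = 0")
    case True then show ?thesis using qM by simp
  next
    case False
    have "M \<in> degree ` set qs" unfolding M_def using assms by (intro Max_in) auto
    then obtain q0 where q0: "q0 \<in> set qs" "degree q0 = M" by auto
    have q0nz: "q0 \<noteq> 0" using q0 False by auto
    have c: "coeff (q' * q') (2 * M) = (if degree q' = M then (lead_coeff q')^2 else 0)" if "q' \<in> set qs" for q'
    proof -
      have "degree q' \<le> M" unfolding M_def using that by auto
      show ?thesis
      proof (cases "degree q' = M")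
        case True then show ?thesis using coeff_mult_degree_sum[of q' q'] by (simp add: power2_eq_square mult_2)
      next
        case F: False
        then have "degree (q' * q') < 2 * M" using \<open>degree q' \<le> M\<close> degree_mult_le[of q' q'] by linarith
        then show ?thesis using F by (simp add: coeff_eq_0)
      qed
    qed
    have "coeff (sum_list (map (\<lambda>q. q * q) qs)) (2 * M) = sum_list (map (\<lambda>q'. coeff (q' * q') (2 * M)) qs)"
      by (rule coeff_sum_list_map)
    also have "\<dots> = sum_list (map (\<lambda>q'. if degree q' = M then (lead_coeff q')^2 else 0) qs)"
      using c by (intro arg_cong[where f=sum_list] map_cong) auto
    also have "\<dots> \<ge> (lead_coeff q0)^2"
      using q0 by (intro member_le_sum_list) auto
    finally have ge: "coeff (sum_list (map (\<lambda>q. q * q) qs)) (2 * M) \<ge> (lead_coeff q0)^2" .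
    have "lead_coeff q0 \<noteq> 0" using q0nz by simp
    then have "(lead_coeff q0)^2 > 0" by simp
    then have "coeff (sum_list (map (\<lambda>q. q * q) qs)) (2 * M) \<noteq> 0" using ge by linarith
    then have "2 * M \<le> degree (sum_list (map (\<lambda>q. q * q) qs))" by (rule le_degree)
    then show ?thesis using qM by linarith
  qed
qed

definition linepoly :: "nat \<Rightarrow> ((nat \<Rightarrow> real) \<Rightarrow> real) \<Rightarrow> bool" where
  "linepoly n f \<longleftrightarrow> (\<forall>x i. i < n \<longrightarrow> (\<exists>q. \<forall>t. f (x(i:=t)) = poly q t))"

lemma linedeg_linepoly: "linedeg n D f \<Longrightarrow> linepoly n f"
  unfolding linedeg_def linepoly_def by blast

lemma is_poly_lp: "is_poly n f \<Longrightarrow> linepoly n f"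
  using is_poly_linepoly linedeg_linepoly by blast

lemma poly_zero_inf:
  fixes q :: "real poly"
  assumes "\<And>t. P t \<Longrightarrow> poly q t = 0" "infinite {t. P t}"
  shows "q = 0"
proof (rule ccontr)
  assume "q \<noteq> 0"
  then have "finite {t. poly q t = 0}" by (rule poly_roots_finite)
  moreover have "{t. P t} \<subseteq> {t. poly q t = 0}" using assms(1) by auto
  ultimately show False using assms(2) finite_subset by blast
qed

lemma inf_neg: "infinite {t::real. t < 0}"
proof -
  have "inj (\<lambda>k::nat. - real k - 1)" by (auto simp: inj_def)
  then have "infinite (range (\<lambda>k::nat. - real k - 1))" by (rule range_inj_infinite)
  moreover have "range (\<lambda>k::nat. - real k - 1) \<subseteq> {t::real. t < 0}" by auto
  ultimately show ?thesis using finite_subset by blast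
qed

lemma inf_pos: "infinite {t::real. t > 0}"
proof -
  have "inj (\<lambda>k::nat. real k + 1)" by (auto simp: inj_def)
  then have "infinite (range (\<lambda>k::nat. real k + 1))" by (rule range_inj_infinite)
  moreover have "range (\<lambda>k::nat. real k + 1) \<subseteq> {t::real. t > 0}" by auto
  ultimately show ?thesis using finite_subset by blast
qed

lemma inf_nz: "infinite {t::real. t \<noteq> 0}"
  using inf_pos by (rule infinite_super[rotated]) auto

lemma zero_ext_aux:
  assumes lp: "linepoly n f"
  shows "finite J \<Longrightarrow> J \<subseteq> {..<n} \<Longrightarrow> (\<forall>x. (\<forall>j\<in>J. x j \<noteq> 0) \<longrightarrow> f x = 0) \<Longrightarrow> \<forall>x. f x = 0"
proof (induction J rule: finite_induct)
  case empty then show ?case by auto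
next
  case (insert a J)
  have "\<forall>x. (\<forall>j\<in>J. x j \<noteq> 0) \<longrightarrow> f x = 0"
  proof (intro allI impI)
    fix x :: "nat \<Rightarrow> real" assume xJ: "\<forall>j\<in>J. x j \<noteq> 0"
    show "f x = 0"
    proof (cases "x a = 0")
      case False then show ?thesis using xJ insert.prems by auto
    next
      case True
      have "a < n" using insert.prems by auto
      then obtain q where q: "\<And>t. f (x(a:=t)) = poly q t" using lp unfolding linepoly_def by blast
      have "\<And>t. t \<noteq> 0 \<Longrightarrow> poly q t = 0"
      proof -
        fix t :: real assume "t \<noteq> 0"
        have "\<forall>j\<in>insert a J. (x(a:=t)) j \<noteq> 0" using xJ \<open>t \<noteq> 0\<close> insert.hyps by auto
        then have "f (x(a:=t)) = 0" using insert.prems by blast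
        then show "poly q t = 0" using q by simp
      qed
      then have "q = 0" by (intro poly_zero_inf[of "\<lambda>t. t \<noteq> 0"]) (auto simp: inf_nz)
      then show ?thesis using q[of "x a"] by simp
    qed
  qed
  then show ?case using insert by auto
qed

lemma zero_ext:
  assumes "linepoly n f" "finite J" "J \<subseteq> {..<n}" "\<And>x. (\<forall>j\<in>J. x j \<noteq> 0) \<Longrightarrow> f x = 0"
  shows "f x = 0"
  using zero_ext_aux[OF assms(1-3)] assms(4) by blast

lemma linepoly_mult: "linepoly n f \<Longrightarrow> linepoly n g \<Longrightarrow> linepoly n (\<lambda>x. f x * g x)"
  unfolding linepoly_def
proof (intro allI impI)
  fix x i assume a: "\<forall>x i. i < n \<longrightarrow> (\<exists>q. \<forall>t. f (x(i := t)) = poly q t)"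
     "\<forall>x i. i < n \<longrightarrow> (\<exists>q. \<forall>t. g (x(i := t)) = poly q t)" "i < n"
  then obtain q1 q2 where "\<forall>t. f (x(i := t)) = poly q1 t" "\<forall>t. g (x(i := t)) = poly q2 t" by blast
  then show "\<exists>q. \<forall>t. f (x(i := t)) * g (x(i := t)) = poly q t" by (intro exI[of _ "q1 * q2"]) simp
qed

lemma linepoly_diff: "linepoly n f \<Longrightarrow> linepoly n g \<Longrightarrow> linepoly n (\<lambda>x. f x - g x)"
  unfolding linepoly_def
proof (intro allI impI)
  fix x i assume a: "\<forall>x i. i < n \<longrightarrow> (\<exists>q. \<forall>t. f (x(i := t)) = poly q t)"
     "\<forall>x i. i < n \<longrightarrow> (\<exists>q. \<forall>t. g (x(i := t)) = poly q t)" "i < n"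
  then obtain q1 q2 where "\<forall>t. f (x(i := t)) = poly q1 t" "\<forall>t. g (x(i := t)) = poly q2 t" by blast
  then show "\<exists>q. \<forall>t. f (x(i := t)) - g (x(i := t)) = poly q t" by (intro exI[of _ "q1 - q2"]) simp
qed

lemma sos_linedeg:
  assumes "linedeg n D F" "F = (\<lambda>x. \<Sum>g\<leftarrow>gs. (g x)^2)" "\<forall>g\<in>set gs. is_poly n g" "g \<in> set gs"
  shows "linedeg n D g"
  unfolding linedeg_def
proof (intro allI impI)
  fix x i assume i: "i < n"
  obtain P where P: "degree P \<le> D" "\<And>t. F (x(i:=t)) = poly P t" using assms(1) i unfolding linedeg_def by blast
  define Q where "Q g' = (SOME q. \<forall>t. g' (x(i:=t)) = poly q t)" for g'
  have Q: "\<forall>t. g' (x(i:=t)) = poly (Q g') t" if "g' \<in> set gs" for g'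
  proof -
    have "\<exists>q. \<forall>t. g' (x(i:=t)) = poly q t" using assms(3) that i is_poly_lp unfolding linepoly_def by blast
    then show ?thesis unfolding Q_def by (rule someI_ex)
  qed
  have "poly P t = poly (sum_list (map (\<lambda>q. q * q) (map Q gs))) t" for t
  proof -
    have "poly P t = (\<Sum>g\<leftarrow>gs. (g (x(i:=t)))^2)" using P(2)[of t] assms(2) by simp
    also have "\<dots> = (\<Sum>g\<leftarrow>gs. (poly (Q g) t)^2)"
      using Q by (intro arg_cong[where f=sum_list] map_cong) auto
    also have "\<dots> = poly (sum_list (map (\<lambda>q. q * q) (map Q gs))) t"
      by (induction gs) (auto simp: power2_eq_square)
    finally show ?thesis .
  qed
  then have "P = sum_list (map (\<lambda>q. q * q) (map Q gs))" using poly_eq_poly_eq_iff by blast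
  then have "2 * degree (Q g) \<le> degree P" using sq_sum_degree[of "Q g" "map Q gs"] assms(4) by auto
  then have "degree (Q g) \<le> D" using P(1) by linarith
  then show "\<exists>q. degree q \<le> D \<and> (\<forall>t. g (x(i := t)) = poly q t)" using Q[OF assms(4)] by blast
qed

definition lagp :: "nat \<Rightarrow> nat \<Rightarrow> real poly" where
  "lagp e j = (\<Prod>i\<in>{..e}-{j}. smult (1 / (real j - real i)) [:- real i, 1:])"

lemma poly_lagp_node: "k \<le> e \<Longrightarrow> poly (lagp e j) (real k) = (if k = j then 1 else 0)"
proof -
  assume k: "k \<le> e"
  have "poly (lagp e j) (real k) = (\<Prod>i\<in>{..e}-{j}. (real k - real i) / (real j - real i))"
    unfolding lagp_def poly_prod by (intro prod.cong) (auto simp: diff_divide_distrib)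
  also have "\<dots> = (if k = j then 1 else 0)"
  proof (cases "k = j")
    case True then show ?thesis by (auto intro!: prod.neutral)
  next
    case False
    then have "k \<in> {..e}-{j}" using k by auto
    then have "(\<Prod>i\<in>{..e}-{j}. (real k - real i) / (real j - real i)) = 0"
      by (intro prod_zero) auto
    then show ?thesis using False by simp
  qed
  finally show ?thesis .
qed

lemma degree_lagp: "j \<le> e \<Longrightarrow> degree (lagp e j) \<le> e"
proof -
  assume j: "j \<le> e"
  have "degree (lagp e j) \<le> sum (degree \<circ> (\<lambda>i. smult (1 / (real j - real i)) [:- real i, 1:])) ({..e}-{j})"
    unfolding lagp_def by (rule degree_prod_sum_le) simp
  also have "\<dots> = (\<Sum>i\<in>{..e}-{j}. degree (smult (1 / (real j - real i)) [:- real i, 1:]))" by simp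
  also have "\<dots> \<le> (\<Sum>i\<in>{..e}-{j}. 1)" by (intro sum_mono) (auto intro: order_trans[OF degree_smult_le])
  also have "\<dots> = e" using j by simp
  finally show ?thesis .
qed

lemma lagrange1:
  fixes q :: "real poly"
  assumes "degree q \<le> e"
  shows "poly q t = (\<Sum>j\<le>e. poly q (real j) * poly (lagp e j) t)"
proof -
  define L where "L = (\<Sum>j\<le>e. smult (poly q (real j)) (lagp e j))"
  define r where "r = q - L"
  have dL: "degree L \<le> e" unfolding L_def
    by (intro degree_sum_le) (auto intro: order_trans[OF degree_smult_le] degree_lagp)
  have dr: "degree r \<le> e" unfolding r_def using dL assms by (meson degree_diff_le)
  have roots: "poly r (real k) = 0" if "k \<le> e" for k
  proof -
    have "poly L (real k) = (\<Sum>j\<le>e. poly q (real j) * (if k = j then 1 else 0))"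
      unfolding L_def poly_sum using that by (intro sum.cong) (auto simp: poly_lagp_node)
    also have "\<dots> = poly q (real k)" using that by (simp add: if_distrib cong: if_cong)
    finally show ?thesis unfolding r_def by simp
  qed
  have "r = 0"
  proof (rule ccontr)
    assume "r \<noteq> 0"
    then have "card {x. poly r x = 0} \<le> degree r" by (rule card_poly_roots_bound)
    moreover have "real ` {..e} \<subseteq> {x. poly r x = 0}" using roots by auto
    moreover have "finite {x. poly r x = 0}" using \<open>r \<noteq> 0\<close> by (rule poly_roots_finite)
    ultimately have "card (real ` {..e}) \<le> e" using dr by (meson card_mono order_trans)
    moreover have "card (real ` {..e}) = e + 1" by (subst card_image) (auto simp: inj_on_def)
    ultimately show False by simp
  qed
  then have "q = L" unfolding r_def by simp
  then have "poly q t = poly L t" by simp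
  also have "\<dots> = (\<Sum>j\<le>e. poly q (real j) * poly (lagp e j) t)" unfolding L_def poly_sum poly_smult ..
  finally show ?thesis .
qed

definition ovr :: "nat set \<Rightarrow> (nat \<Rightarrow> nat) \<Rightarrow> (nat \<Rightarrow> real) \<Rightarrow> (nat \<Rightarrow> real)" where
  "ovr I s x = (\<lambda>j. if j \<in> I then real (s j) else x j)"

definition lagm :: "nat \<Rightarrow> nat set \<Rightarrow> (nat \<Rightarrow> nat) \<Rightarrow> (nat \<Rightarrow> real) \<Rightarrow> real" where
  "lagm e I s x = (\<Prod>i\<in>I. poly (lagp e (s i)) (x i))"

lemma lagrange_multi:
  assumes ld: "linedeg n e g"
  shows "finite I \<Longrightarrow> I \<subseteq> {..<n} \<Longrightarrow> g x = (\<Sum>s\<in>Pi\<^sub>E I (\<lambda>_. {..e}). lagm e I s x * g (ovr I s x))"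
proof (induction I rule: finite_induct)
  case empty
  have "ovr {} (\<lambda>_. undefined) x = x" unfolding ovr_def by simp
  then show ?case by (simp add: lagm_def)
next
  case (insert a I)
  have an: "a < n" using insert.prems by auto
  have step: "g (ovr I s x) = (\<Sum>j\<le>e. poly (lagp e j) (x a) * g (ovr (insert a I) (s(a:=j)) x))" for s
  proof -
    define y where "y = ovr I s x"
    obtain q where q: "degree q \<le> e" "\<And>t. g (y(a:=t)) = poly q t"
      using ld an unfolding linedeg_def by blast
    have ya: "y(a := x a) = y" unfolding y_def ovr_def using insert.hyps by auto
    have yj: "y(a := real j) = ovr (insert a I) (s(a:=j)) x" for j
      unfolding y_def ovr_def using insert.hyps by auto
    have "g y = poly q (x a)" using q(2)[of "x a"] ya by simp
    also have "\<dots> = (\<Sum>j\<le>e. poly q (real j) * poly (lagp e j) (x a))" by (rule lagrange1[OF q(1)])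
    also have "\<dots> = (\<Sum>j\<le>e. poly (lagp e j) (x a) * g (ovr (insert a I) (s(a:=j)) x))"
    proof (intro sum.cong refl)
      fix j show "poly q (real j) * poly (lagp e j) (x a) = poly (lagp e j) (x a) * g (ovr (insert a I) (s(a:=j)) x)"
        using q(2)[of "real j"] yj[of j] by simp
    qed
    finally show ?thesis unfolding y_def .
  qed
  have lm: "lagm e (insert a I) (s(a:=j)) x = poly (lagp e j) (x a) * lagm e I s x" for s j
    unfolding lagm_def using insert.hyps by (auto intro!: prod.cong)
  have "g x = (\<Sum>s\<in>Pi\<^sub>E I (\<lambda>_. {..e}). lagm e I s x * g (ovr I s x))" using insert by auto
  also have "\<dots> = (\<Sum>s\<in>Pi\<^sub>E I (\<lambda>_. {..e}). \<Sum>j\<le>e. lagm e (insert a I) (s(a:=j)) x * g (ovr (insert a I) (s(a:=j)) x))"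
    by (intro sum.cong refl) (simp add: step lm sum_distrib_left ac_simps)
  also have "\<dots> = (\<Sum>j\<le>e. \<Sum>s\<in>Pi\<^sub>E I (\<lambda>_. {..e}). lagm e (insert a I) (s(a:=j)) x * g (ovr (insert a I) (s(a:=j)) x))"
    by (rule sum.swap)
  also have "\<dots> = (\<Sum>p\<in>{..e} \<times> Pi\<^sub>E I (\<lambda>_. {..e}). lagm e (insert a I) ((snd p)(a:=fst p)) x * g (ovr (insert a I) ((snd p)(a:=fst p)) x))"
    by (subst sum.cartesian_product) (simp add: case_prod_beta)
  also have "\<dots> = (\<Sum>s\<in>Pi\<^sub>E (insert a I) (\<lambda>_. {..e}). lagm e (insert a I) s x * g (ovr (insert a I) s x))"
  proof -
    have inj: "inj_on (\<lambda>(y, g). g(a := y)) ({..e} \<times> Pi\<^sub>E I (\<lambda>_. {..e}))"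
      using inj_combinator[OF insert.hyps(2), of "\<lambda>_. {..e}"] by simp
    show ?thesis unfolding PiE_insert_eq
      by (subst sum.reindex[OF inj]) (simp add: case_prod_beta)
  qed
  finally show ?case .
qed

definition pt :: "nat \<Rightarrow> (nat \<Rightarrow> nat) \<Rightarrow> (nat \<Rightarrow> real)" where
  "pt n s = ovr {..<n} s (\<lambda>_. 0)"

definition grid :: "nat \<Rightarrow> nat \<Rightarrow> (nat \<Rightarrow> nat) set" where
  "grid n e = Pi\<^sub>E {..<n} (\<lambda>_. {..e})"

lemma finite_grid: "finite (grid n e)"
  unfolding grid_def by (rule finite_PiE) auto

lemma lagrange_grid:
  assumes "linedeg n e g" "loc n g"
  shows "g x = (\<Sum>s\<in>grid n e. lagm e {..<n} s x * g (pt n s))"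
proof -
  have "g x = (\<Sum>s\<in>grid n e. lagm e {..<n} s x * g (ovr {..<n} s x))"
    unfolding grid_def by (rule lagrange_multi[OF assms(1)]) auto
  also have "\<dots> = (\<Sum>s\<in>grid n e. lagm e {..<n} s x * g (pt n s))"
  proof (intro sum.cong refl arg_cong2[where f="(*)"])
    fix s show "g (ovr {..<n} s x) = g (pt n s)"
      using assms(2) unfolding loc_def pt_def ovr_def by auto
  qed
  finally show ?thesis .
qed

lemma is_poly_lagm: "is_poly n (lagm e {..<n} s)"
  unfolding lagm_def by (rule is_poly_prod) (auto intro: is_poly_univ)

lemma sq_expand:
  fixes y :: "'s \<Rightarrow> real"
  shows "(\<Sum>g\<leftarrow>gs. (\<Sum>s\<in>S. y s * b g s)^2) = (\<Sum>s\<in>S. \<Sum>s'\<in>S. y s * y s' * (\<Sum>g\<leftarrow>gs. b g s * b g s'))"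
proof (induction gs)
  case Nil then show ?case by simp
next
  case (Cons g gs)
  have "(\<Sum>s\<in>S. y s * b g s)^2 = (\<Sum>s\<in>S. \<Sum>s'\<in>S. y s * y s' * (b g s * b g s'))"
    unfolding power2_eq_square sum_product by (intro sum.cong refl) (simp only: ac_simps)
  then have "(\<Sum>g\<leftarrow>g # gs. (\<Sum>s\<in>S. y s * b g s)^2) = (\<Sum>s\<in>S. \<Sum>s'\<in>S. y s * y s' * (b g s * b g s')) + (\<Sum>s\<in>S. \<Sum>s'\<in>S. y s * y s' * (\<Sum>g\<leftarrow>gs. b g s * b g s'))"
    using Cons by (simp only: sum_list.Cons list.map)
  also have "\<dots> = (\<Sum>s\<in>S. \<Sum>s'\<in>S. y s * y s' * (b g s * b g s') + y s * y s' * (\<Sum>g\<leftarrow>gs. b g s * b g s'))"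
    by (simp only: sum.distrib)
  also have "\<dots> = (\<Sum>s\<in>S. \<Sum>s'\<in>S. y s * y s' * (\<Sum>g\<leftarrow>g # gs. b g s * b g s'))"
    by (simp only: distrib_left sum_list.Cons list.map)
  finally show ?case .
qed

lemma abs_sum_list_prod:
  fixes a b :: "'g \<Rightarrow> real"
  shows "2 * \<bar>\<Sum>g\<leftarrow>gs. a g * b g\<bar> \<le> (\<Sum>g\<leftarrow>gs. (a g)^2) + (\<Sum>g\<leftarrow>gs. (b g)^2)"
proof (induction gs)
  case Nil then show ?case by simp
next
  case (Cons g gs)
  have h: "2 * \<bar>a g * b g\<bar> \<le> (a g)^2 + (b g)^2"
  proof -
    have "0 \<le> (a g - b g)^2" "0 \<le> (a g + b g)^2" by simp_all
    then show ?thesis by (simp add: power2_eq_square abs_le_iff algebra_simps)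
  qed
  have t: "\<bar>a g * b g + (\<Sum>g\<leftarrow>gs. a g * b g)\<bar> \<le> \<bar>a g * b g\<bar> + \<bar>\<Sum>g\<leftarrow>gs. a g * b g\<bar>"
    by (rule abs_triangle_ineq)
  have e1: "(\<Sum>g\<leftarrow>g # gs. a g * b g) = a g * b g + (\<Sum>g\<leftarrow>gs. a g * b g)" by simp
  have e2: "(\<Sum>g\<leftarrow>g # gs. (a g)^2) = (a g)^2 + (\<Sum>g\<leftarrow>gs. (a g)^2)" by simp
  have e3: "(\<Sum>g\<leftarrow>g # gs. (b g)^2) = (b g)^2 + (\<Sum>g\<leftarrow>gs. (b g)^2)" by simp
  show ?case unfolding e1 e2 e3 using h t Cons.IH by (smt (verit))
qed

lemma bw_real: "Bseq (f :: nat \<Rightarrow> real) \<Longrightarrow> \<exists>r. strict_mono r \<and> convergent (\<lambda>j. f (r j))"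
proof -
  assume b: "Bseq f"
  obtain r where r: "strict_mono r" "monoseq (\<lambda>n. f (r n))" using seq_monosub by blast
  have "Bseq (\<lambda>n. f (r n))" using b unfolding Bseq_def by auto
  then have "convergent (\<lambda>n. f (r n))" using r(2) by (rule Bseq_monoseq_convergent)
  then show ?thesis using r(1) by blast
qed

lemma convergent_subseq: "convergent f \<Longrightarrow> strict_mono r \<Longrightarrow> convergent (\<lambda>j. f (r j))"
proof -
  assume a: "convergent f" "strict_mono r"
  then obtain L where "f \<longlonglongrightarrow> L" by (auto simp: convergent_def)
  then have "(f \<circ> r) \<longlonglongrightarrow> L" using a(2) by (rule LIMSEQ_subseq_LIMSEQ)
  then show ?thesis by (auto simp: convergent_def o_def)
qed

lemma fin_subseq:
  fixes X :: "nat \<Rightarrow> 'k \<Rightarrow> real"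
  shows "finite K \<Longrightarrow> (\<forall>k\<in>K. Bseq (\<lambda>j. X j k)) \<Longrightarrow> \<exists>r. strict_mono r \<and> (\<forall>k\<in>K. convergent (\<lambda>j. X (r j) k))"
proof (induction K rule: finite_induct)
  case empty then show ?case by (intro exI[of _ id]) (auto simp: strict_mono_def)
next
  case (insert a K)
  then obtain r where r: "strict_mono r" "\<forall>k\<in>K. convergent (\<lambda>j. X (r j) k)" by auto
  have "Bseq (\<lambda>j. X (r j) a)" using insert.prems unfolding Bseq_def by auto
  then obtain r' where r': "strict_mono r'" "convergent (\<lambda>j. X (r (r' j)) a)" using bw_real by blast
  have "strict_mono (r \<circ> r')" using r(1) r'(1) by (rule strict_mono_o)
  moreover have "\<forall>k\<in>insert a K. convergent (\<lambda>j. X ((r \<circ> r') j) k)"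
  proof
    fix k assume k: "k \<in> insert a K"
    show "convergent (\<lambda>j. X ((r \<circ> r') j) k)"
    proof (cases "k = a")
      case True then show ?thesis using r'(2) by (simp add: o_def)
    next
      case False
      then have "k \<in> K" using k by auto
      then have "convergent (\<lambda>j. X (r j) k)" using r(2) by blast
      from convergent_subseq[OF this r'(1)] show ?thesis by (simp add: o_def)
    qed
  qed
  ultimately show ?case by blast
qed

definition qf :: "'a set \<Rightarrow> ('a \<Rightarrow> 'a \<Rightarrow> real) \<Rightarrow> ('a \<Rightarrow> real) \<Rightarrow> real" where
  "qf S G y = (\<Sum>s\<in>S. \<Sum>s'\<in>S. y s * y s' * G s s')"

lemma qf_insert:
  assumes "finite S" "a \<notin> S" "\<forall>s s'. G s s' = G s' s"
  shows "qf (insert a S) G y = y a * y a * G a a + 2 * y a * (\<Sum>s\<in>S. G a s * y s) + qf S G y"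
proof -
  have "qf (insert a S) G y = (y a * y a * G a a + (\<Sum>s'\<in>S. y a * y s' * G a s')) +
      (\<Sum>s\<in>S. y s * y a * G s a + (\<Sum>s'\<in>S. y s * y s' * G s s'))"
    unfolding qf_def using assms(1,2) by simp
  also have "\<dots> = y a * y a * G a a + (\<Sum>s'\<in>S. y a * y s' * G a s') + (\<Sum>s\<in>S. y s * y a * G s a) + qf S G y"
    unfolding qf_def by (simp add: sum.distrib)
  also have "(\<Sum>s\<in>S. y s * y a * G s a) = y a * (\<Sum>s\<in>S. G a s * y s)"
    unfolding sum_distrib_left using assms(3) by (intro sum.cong refl) (metis mult.commute mult.left_commute)
  also have "(\<Sum>s'\<in>S. y a * y s' * G a s') = y a * (\<Sum>s\<in>S. G a s * y s)"
    unfolding sum_distrib_left by (intro sum.cong refl) (simp add: ac_simps)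
  finally show ?thesis by simp
qed

lemma qf_cong: "(\<And>s. s \<in> S \<Longrightarrow> y s = z s) \<Longrightarrow> qf S G y = qf S G z"
  unfolding qf_def by (intro sum.cong refl) auto

lemma lin_upd_cong: fixes w y :: "'a \<Rightarrow> real"
  assumes that: "finite S" and a: "a \<notin> S"
  shows "(\<Sum>s\<in>insert a S. (w(a:=0)) s * y s) = (\<Sum>s\<in>S. w s * y s)"
proof -
  have "(\<Sum>s\<in>S. (w(a:=0)) s * y s) = (\<Sum>s\<in>S. w s * y s)" using a by (intro sum.cong) auto
  then show ?thesis using that a by simp
qed

lemma psd_decomp:
  fixes G :: "'a \<Rightarrow> 'a \<Rightarrow> real"
  assumes "finite S" 
  shows "(\<forall>s s'. G s s' = G s' s) \<Longrightarrow> (\<forall>v. 0 \<le> qf S G v) \<Longrightarrow>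
    \<exists>ws. \<forall>y. qf S G y = (\<Sum>w\<leftarrow>ws. (\<Sum>s\<in>S. w s * y s)^2)"
  using assms
proof (induction S arbitrary: G rule: finite_induct)
  case empty then show ?case by (intro exI[of _ "[]"]) (simp add: qf_def)
next
  case (insert a S)
  note sym = insert.prems(1) and psd = insert.prems(2)
  have ex: "qf (insert a S) G y = y a * y a * G a a + 2 * y a * (\<Sum>s\<in>S. G a s * y s) + qf S G y" for y
    using qf_insert[OF insert.hyps(1,2) sym] .
  have lin_upd: "(\<Sum>s\<in>insert a S. (w(a:=0)) s * y s) = (\<Sum>s\<in>S. w s * y s)" for w y :: "'a \<Rightarrow> real"
    using lin_upd_cong[OF insert.hyps(1,2)] .
  show ?case
  proof (cases "G a a > 0")
    case True
    define g where "g = G a a"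
    define L where "L y = (\<Sum>s\<in>S. G a s * y s)" for y
    define G' where "G' s s' = G s s' - G a s * G a s' / g" for s s'
    have qG': "qf S G' y = qf S G y - (L y)^2 / g" for y
    proof -
      have "(L y)^2 / g = (\<Sum>s\<in>S. \<Sum>s'\<in>S. y s * y s' * (G a s * G a s' / g))"
        unfolding L_def power2_eq_square sum_product sum_divide_distrib
        by (intro sum.cong refl) (simp add: ac_simps)
      then show ?thesis unfolding qf_def G'_def by (simp add: right_diff_distrib sum_subtractf)
    qed
    have main: "qf (insert a S) G y = g * (y a + L y / g)^2 + qf S G' y" for y
      unfolding ex qG' using True unfolding g_def L_def
      by (simp add: power2_eq_square field_simps)
    have symG': "\<forall>s s'. G' s s' = G' s' s" unfolding G'_def using sym by (simp add: ac_simps)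
    have psdG': "\<forall>v. 0 \<le> qf S G' v"
    proof
      fix v
      define v' where "v' = v(a := - L v / g)"
      have "L v' = L v" unfolding L_def v'_def using insert.hyps(2) by (intro sum.cong refl) auto
      have "qf S G' v' = qf S G' v" unfolding v'_def using insert.hyps(2) by (intro qf_cong) auto
      moreover have "0 \<le> qf (insert a S) G v'" using psd by blast
      ultimately show "0 \<le> qf S G' v" unfolding main using \<open>L v' = L v\<close> by (simp add: v'_def)
    qed
    obtain ws' where ws': "\<forall>y. qf S G' y = (\<Sum>w\<leftarrow>ws'. (\<Sum>s\<in>S. w s * y s)^2)"
      using insert.IH[OF symG' psdG'] by blast
    define w0 where "w0 s = (if s = a then sqrt g else G a s / sqrt g)" for s
    have gpos: "g > 0" using True g_def by simp
    have w0: "(\<Sum>s\<in>insert a S. w0 s * y s)^2 = g * (y a + L y / g)^2" for y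
    proof -
      have "(\<Sum>s\<in>insert a S. w0 s * y s) = sqrt g * y a + L y / sqrt g"
        unfolding L_def w0_def using insert.hyps by (simp add: sum_divide_distrib) (intro sum.cong refl, auto)
      also have "\<dots> = sqrt g * (y a + L y / g)" using gpos
        by (simp add: field_simps)
      finally show ?thesis using gpos by (simp add: power_mult_distrib)
    qed
    show ?thesis
    proof (intro exI[of _ "w0 # map (\<lambda>w. w(a:=0)) ws'"] allI)
      fix y
      show "qf (insert a S) G y = (\<Sum>w\<leftarrow>w0 # map (\<lambda>w. w(a:=0)) ws'. (\<Sum>s\<in>insert a S. w s * y s)^2)"
      proof -
        have "(\<Sum>w\<leftarrow>map (\<lambda>w. w(a:=0)) ws'. (\<Sum>s\<in>insert a S. w s * y s)^2) = (\<Sum>w\<leftarrow>ws'. (\<Sum>s\<in>S. w s * y s)^2)"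
          by (simp only: map_map o_def lin_upd)
        then show ?thesis unfolding main using ws' w0 by simp
      qed
    qed
  next
    case False
    have "0 \<le> qf (insert a S) G (\<lambda>t. if t = a then 1 else 0)" using psd by blast
    also have "qf (insert a S) G (\<lambda>t. if t = a then 1 else 0) = G a a"
    proof -
      have z: "(\<Sum>s\<in>S. G a s * (if s = a then 1 else 0)) = 0" "qf S G (\<lambda>t. if t = a then 1 else 0) = 0"
        using insert.hyps(2) by (auto simp: qf_def intro!: sum.neutral)
      show ?thesis unfolding ex using z by simp
    qed
    finally have gaa: "G a a = 0" using False by simp
    have gas: "G a s = 0" if s: "s \<in> S" for s
    proof (rule ccontr)
      assume c: "G a s \<noteq> 0"
      define l where "l = - (G s s + 1) / (2 * G a s)"
      define v where "v t = (if t = a then l else if t = s then 1 else 0)" for t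
      have "0 \<le> qf (insert a S) G v" using psd by (rule spec)
      also have "qf (insert a S) G v = 2 * l * G a s + G s s"
      proof -
        have vS: "v t = (if t = s then 1 else 0)" if "t \<in> S" for t
          using that insert.hyps(2) unfolding v_def by auto
        have "(\<Sum>s'\<in>S. G a s' * v s') = (\<Sum>s'\<in>S. if s' = s then G a s else 0)"
          using vS by (intro sum.cong refl) auto
        also have "\<dots> = G a s" using s insert.hyps(1) by simp
        finally have 1: "(\<Sum>s'\<in>S. G a s' * v s') = G a s" .
        have "qf S G v = (\<Sum>s1\<in>S. if s1 = s then (\<Sum>s2\<in>S. if s2 = s then G s s else 0) else 0)"
          unfolding qf_def using vS by (intro sum.cong refl) (auto intro!: sum.cong)
        also have "\<dots> = G s s" using s insert.hyps(1) by simp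
        finally have 2: "qf S G v = G s s" .
        note 1 2
        moreover have "v a = l" unfolding v_def by simp
        ultimately show ?thesis unfolding ex gaa by simp
      qed
      also have "\<dots> = -1" unfolding l_def using c by (simp add: field_simps)
      finally show False by simp
    qed
    have main: "qf (insert a S) G y = qf S G y" for y
      unfolding ex gaa using gas by simp
    have psdS: "\<forall>v. 0 \<le> qf S G v" using psd main by simp
    obtain ws' where ws': "\<forall>y. qf S G y = (\<Sum>w\<leftarrow>ws'. (\<Sum>s\<in>S. w s * y s)^2)"
      using insert.IH[OF sym psdS] by blast
    show ?thesis
    proof (intro exI[of _ "map (\<lambda>w. w(a:=0)) ws'"] allI)
      fix y
      have "(\<Sum>w\<leftarrow>map (\<lambda>w. w(a:=0)) ws'. (\<Sum>s\<in>insert a S. w s * y s)^2) = (\<Sum>w\<leftarrow>ws'. (\<Sum>s\<in>S. w s * y s)^2)"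
        by (simp only: map_map o_def lin_upd)
      then show "qf (insert a S) G y = (\<Sum>w\<leftarrow>map (\<lambda>w. w(a:=0)) ws'. (\<Sum>s\<in>insert a S. w s * y s)^2)"
        unfolding main using ws' by simp
    qed
  qed
qed

lemma sos_limit:
  assumes sos: "\<And>j. is_sos n (F j)" and ld: "\<And>j. linedeg n D (F j)"
      and lim: "\<And>x. (\<lambda>j. F j x) \<longlonglongrightarrow> G x"
  shows "is_sos n G"
proof -
  have "\<forall>j. \<exists>gs. (\<forall>g\<in>set gs. is_poly n g) \<and> F j = (\<lambda>x. \<Sum>g\<leftarrow>gs. (g x)^2)"
    using sos unfolding is_sos_def by blast
  from choice[OF this] obtain gs where gs0: "\<forall>j. (\<forall>g\<in>set (gs j). is_poly n g) \<and> F j = (\<lambda>x. \<Sum>g\<leftarrow>gs j. (g x)^2)"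
    by blast
  have gs1: "\<forall>g\<in>set (gs j). is_poly n g" for j using gs0 by blast
  have gs2: "F j = (\<lambda>x. \<Sum>g\<leftarrow>gs j. (g x)^2)" for j using gs0 by blast
  define S where "S = grid n D"
  define L where "L s x = lagm D {..<n} s x" for s x
  define P where "P s = pt n s" for s
  have finS: "finite S" unfolding S_def by (rule finite_grid)
  have lagr: "g x = (\<Sum>s\<in>S. L s x * g (P s))" if "g \<in> set (gs j)" for g j x
  proof -
    have "linedeg n D g" by (rule sos_linedeg[OF ld[of j] gs2[of j] gs1[of j] that])
    moreover have "loc n g" using gs1[of j] that is_poly_loc by blast
    ultimately show ?thesis unfolding S_def L_def P_def by (rule lagrange_grid)
  qed
  define Gr where "Gr j s s' = (\<Sum>g\<leftarrow>gs j. g (P s) * g (P s'))" for j s s'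
  have Fexp: "F j x = (\<Sum>s\<in>S. \<Sum>s'\<in>S. L s x * L s' x * Gr j s s')" for j x
  proof -
    have "F j x = (\<Sum>g\<leftarrow>gs j. (\<Sum>s\<in>S. L s x * g (P s))^2)"
      unfolding gs2 using lagr[of _ j x] by (intro arg_cong[where f=sum_list] map_cong refl) auto
    also have "\<dots> = (\<Sum>s\<in>S. \<Sum>s'\<in>S. L s x * L s' x * Gr j s s')"
      unfolding Gr_def by (rule sq_expand)
    finally show ?thesis .
  qed
  have bnd: "2 * \<bar>Gr j s s'\<bar> \<le> F j (P s) + F j (P s')" for j s s'
    unfolding Gr_def gs2 using abs_sum_list_prod[of "\<lambda>g. g (P s)" "\<lambda>g. g (P s')" "gs j"] by simp
  have Bs: "\<exists>K>0. \<forall>j. \<bar>F j (P s)\<bar> \<le> K" for s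
  proof -
    have "convergent (\<lambda>j. F j (P s))" using lim[of "P s"] by (auto simp: convergent_def)
    then have "Bseq (\<lambda>j. F j (P s))" by (rule convergent_imp_Bseq)
    then show ?thesis unfolding Bseq_def by simp
  qed
  have BG: "\<forall>k\<in>S \<times> S. Bseq (\<lambda>j. Gr j (fst k) (snd k))"
  proof
    fix k :: "(nat \<Rightarrow> nat) \<times> (nat \<Rightarrow> nat)"
    obtain K1 where K1: "K1 > 0" "\<forall>j. \<bar>F j (P (fst k))\<bar> \<le> K1" using Bs by blast
    obtain K2 where K2: "K2 > 0" "\<forall>j. \<bar>F j (P (snd k))\<bar> \<le> K2" using Bs by blast
    have "\<forall>j. norm (Gr j (fst k) (snd k)) \<le> K1 + K2"
    proof
      fix j
      have "2 * \<bar>Gr j (fst k) (snd k)\<bar> \<le> F j (P (fst k)) + F j (P (snd k))" by (rule bnd)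
      moreover have "F j (P (fst k)) \<le> K1" "F j (P (snd k)) \<le> K2" using K1 K2 abs_le_iff by blast+
      ultimately show "norm (Gr j (fst k) (snd k)) \<le> K1 + K2" using K1 K2 by simp
    qed
    then show "Bseq (\<lambda>j. Gr j (fst k) (snd k))" unfolding Bseq_def using K1 K2
      by (intro exI[of _ "K1 + K2"]) simp
  qed
  obtain r where r: "strict_mono r" "\<forall>k\<in>S \<times> S. convergent (\<lambda>j. Gr (r j) (fst k) (snd k))"
    using fin_subseq[of "S \<times> S" "\<lambda>j k. Gr j (fst k) (snd k)"] finS BG by auto
  define Gl where "Gl s s' = lim (\<lambda>j. Gr (r j) s s')" for s s'
  have Glim: "(\<lambda>j. Gr (r j) s s') \<longlonglongrightarrow> Gl s s'" if "s \<in> S" "s' \<in> S" for s s'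
    using r(2) that unfolding Gl_def convergent_LIMSEQ_iff by fastforce
  have Gx: "G x = (\<Sum>s\<in>S. \<Sum>s'\<in>S. L s x * L s' x * Gl s s')" for x
  proof -
    have 1: "(\<lambda>j. F (r j) x) \<longlonglongrightarrow> G x" using LIMSEQ_subseq_LIMSEQ[OF lim r(1)] by (simp add: o_def)
    have 2: "(\<lambda>j. F (r j) x) \<longlonglongrightarrow> (\<Sum>s\<in>S. \<Sum>s'\<in>S. L s x * L s' x * Gl s s')"
      unfolding Fexp by (intro tendsto_sum tendsto_mult_left Glim)
    show ?thesis using 1 2 by (rule LIMSEQ_unique)
  qed
  have sym: "\<forall>s s'. Gl s s' = Gl s' s" unfolding Gl_def Gr_def by (simp add: mult.commute)
  have psd: "\<forall>v. 0 \<le> qf S Gl v"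
  proof
    fix v :: "(nat \<Rightarrow> nat) \<Rightarrow> real"
    have "(\<lambda>j. qf S (Gr (r j)) v) \<longlonglongrightarrow> qf S Gl v"
      unfolding qf_def by (intro tendsto_sum tendsto_mult_left Glim)
    moreover have "0 \<le> qf S (Gr (r j)) v" for j
    proof -
      have "qf S (Gr (r j)) v = (\<Sum>g\<leftarrow>gs (r j). (\<Sum>s\<in>S. v s * g (P s))^2)"
        unfolding qf_def Gr_def by (rule sq_expand[symmetric])
      also have "\<dots> \<ge> 0" by (intro sum_list_nonneg) auto
      finally show ?thesis .
    qed
    ultimately show "0 \<le> qf S Gl v" by (intro LIMSEQ_le_const) auto
  qed
  obtain ws where ws: "\<forall>y. qf S Gl y = (\<Sum>w\<leftarrow>ws. (\<Sum>s\<in>S. w s * y s)^2)"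
    using psd_decomp[OF finS sym psd] by blast
  define hs where "hs = map (\<lambda>w x. \<Sum>s\<in>S. w s * L s x) ws"
  have "\<forall>h\<in>set hs. is_poly n h"
    unfolding hs_def L_def using finS by (auto intro!: is_poly_sum is_poly_scale is_poly_lagm)
  moreover have "G = (\<lambda>x. \<Sum>h\<leftarrow>hs. (h x)^2)"
  proof
    fix x
    have "G x = qf S Gl (\<lambda>s. L s x)" unfolding Gx qf_def ..
    also have "\<dots> = (\<Sum>h\<leftarrow>hs. (h x)^2)" using ws by (simp add: hs_def o_def)
    finally show "G x = (\<Sum>h\<leftarrow>hs. (h x)^2)" .
  qed
  ultimately show ?thesis unfolding is_sos_def by blast
qed

lemma is_poly_monom0: "\<beta> \<in> exps n \<Longrightarrow> is_poly n (Defs.monom n \<beta>)"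
  unfolding is_poly_def by (intro exI[of _ "{\<beta>}"] exI[of _ "\<lambda>_. 1"]) auto

lemma is_poly_monom: "is_poly n (Defs.monom n \<beta>)"
proof -
  have "Defs.monom n \<beta> = Defs.monom n (\<lambda>j. if j < n then \<beta> j else 0)"
    unfolding Defs.monom_def by (intro ext prod.cong) auto
  moreover have "(\<lambda>j. if j < n then \<beta> j else 0) \<in> exps n" unfolding exps_def by auto
  ultimately show ?thesis using is_poly_monom0 by metis
qed

lemma is_poly_diff: "is_poly n f \<Longrightarrow> is_poly n g \<Longrightarrow> is_poly n (\<lambda>x. f x - g x)"
  using is_poly_add[of n f "\<lambda>x. (-1) * g x"] is_poly_scale[of n g "-1"] by simp

lemma sum_list_sq_scale: "(\<Sum>g\<leftarrow>gs. (a * h g)^2) = (a::real)^2 * (\<Sum>g\<leftarrow>gs. (h g)^2)"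
  by (induction gs) (simp_all add: power_mult_distrib distrib_left)

lemma sos_scale: "is_sos n f \<Longrightarrow> (a::real) \<ge> 0 \<Longrightarrow> is_sos n (\<lambda>x. a * f x)"
proof -
  assume "is_sos n f" "a \<ge> 0"
  then obtain gs where gs: "\<forall>g\<in>set gs. is_poly n g" "f = (\<lambda>x. \<Sum>g\<leftarrow>gs. (g x)^2)"
    unfolding is_sos_def by blast
  define hs where "hs = map (\<lambda>g x. sqrt a * g x) gs"
  have "\<forall>h\<in>set hs. is_poly n h" unfolding hs_def using gs(1) by (auto intro: is_poly_scale)
  moreover have "(\<lambda>x. a * f x) = (\<lambda>x. \<Sum>h\<leftarrow>hs. (h x)^2)"
  proof
    fix x
    have "(\<Sum>h\<leftarrow>hs. (h x)^2) = (\<Sum>g\<leftarrow>gs. (sqrt a * g x)^2)" unfolding hs_def by (simp add: o_def)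
    also have "\<dots> = a * f x" unfolding sum_list_sq_scale gs(2) using \<open>a \<ge> 0\<close> by simp
    finally show "a * f x = (\<Sum>h\<leftarrow>hs. (h x)^2)" by simp
  qed
  ultimately show ?thesis unfolding is_sos_def by blast
qed

lemma sos_zero: "is_sos n (\<lambda>x. 0)"
  unfolding is_sos_def by (intro exI[of _ "[]"]) simp

lemma sos_nonneg: "is_sos n f \<Longrightarrow> f x \<ge> 0"
  unfolding is_sos_def by (auto intro!: sum_list_nonneg)

lemma monom_split:
  assumes "i < n" "\<alpha> i \<ge> 1"
  shows "Defs.monom n \<alpha> x = x i * Defs.monom n (\<alpha>(i := \<alpha> i - 1)) x"
proof -
  have x: "x(i := x i) = x" by simp
  have "Defs.monom n \<alpha> x = x i ^ \<alpha> i * (\<Prod>j\<in>{..<n}-{i}. x j ^ \<alpha> j)"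
    using monom_upd[OF assms(1), of \<alpha> x "x i"] x by simp
  moreover have "Defs.monom n (\<alpha>(i := \<alpha> i - 1)) x = x i ^ (\<alpha> i - 1) * (\<Prod>j\<in>{..<n}-{i}. x j ^ \<alpha> j)"
  proof -
    have pe: "(\<Prod>j\<in>{..<n}-{i}. x j ^ (\<alpha>(i := \<alpha> i - 1)) j) = (\<Prod>j\<in>{..<n}-{i}. x j ^ \<alpha> j)"
      by (intro prod.cong) auto
    have "Defs.monom n (\<alpha>(i := \<alpha> i - 1)) (x(i := x i)) = x i ^ (\<alpha>(i := \<alpha> i - 1)) i * (\<Prod>j\<in>{..<n}-{i}. x j ^ (\<alpha>(i := \<alpha> i - 1)) j)"
      by (rule monom_upd[OF assms(1)])
    then show ?thesis unfolding pe x by simp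
  qed
  moreover have "x i ^ \<alpha> i = x i * x i ^ (\<alpha> i - 1)" using assms(2)
    by (metis Suc_diff_le diff_Suc_1 power_Suc)
  ultimately show ?thesis by simp
qed

lemma monom_indep: "i < n \<Longrightarrow> \<alpha> i = 0 \<Longrightarrow> Defs.monom n \<alpha> (x(i:=t)) = Defs.monom n \<alpha> x"
  using monom_upd[of i n \<alpha> x t] monom_upd[of i n \<alpha> x "x i"] by simp

lemma exps_upd: "\<alpha> \<in> exps n \<Longrightarrow> i < n \<Longrightarrow> \<alpha>(i := k) \<in> exps n"
  unfolding exps_def by auto

lemma div_var:
  assumes "is_poly n g" "i < n" "\<And>x. x i = 0 \<Longrightarrow> g x = 0"
  shows "\<exists>g'. is_poly n g' \<and> (\<forall>x. g x = x i * g' x)"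
proof -
  obtain A c where A: "finite A" "A \<subseteq> exps n" "g = (\<lambda>x. \<Sum>\<alpha>\<in>A. c \<alpha> * Defs.monom n \<alpha> x)"
    using assms(1) unfolding is_poly_def by blast
  define A0 where "A0 = {\<alpha>\<in>A. \<alpha> i = 0}"
  define A1 where "A1 = {\<alpha>\<in>A. \<alpha> i \<noteq> 0}"
  define g0 where "g0 x = (\<Sum>\<alpha>\<in>A0. c \<alpha> * Defs.monom n \<alpha> x)" for x
  define g' where "g' x = (\<Sum>\<alpha>\<in>A1. c \<alpha> * Defs.monom n (\<alpha>(i := \<alpha> i - 1)) x)" for x
  have split: "g x = g0 x + x i * g' x" for x
  proof -
    have "A = A0 \<union> A1" "A0 \<inter> A1 = {}" unfolding A0_def A1_def by auto
    then have "g x = g0 x + (\<Sum>\<alpha>\<in>A1. c \<alpha> * Defs.monom n \<alpha> x)"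
      unfolding A(3) g0_def using A(1) by (simp add: sum.union_disjoint)
    also have "(\<Sum>\<alpha>\<in>A1. c \<alpha> * Defs.monom n \<alpha> x) = x i * g' x"
      unfolding g'_def sum_distrib_left
      by (intro sum.cong refl) (simp add: A1_def monom_split[OF assms(2)] ac_simps)
    finally show ?thesis .
  qed
  have g0z: "g0 x = 0" for x
  proof -
    have "g0 x = g0 (x(i:=0))" unfolding g0_def A0_def
      by (intro sum.cong refl) (simp add: monom_indep[OF assms(2)])
    also have "\<dots> = g (x(i:=0))" using split[of "x(i:=0)"] by simp
    also have "\<dots> = 0" using assms(3) by simp
    finally show ?thesis .
  qed
  have "is_poly n g'" unfolding g'_def using A(1,2) assms(2)
    by (intro is_poly_sum is_poly_scale is_poly_monom) (auto simp: A1_def)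
  then show ?thesis using split g0z by auto
qed

lemma mono_div_sos:
  assumes p: "is_poly n p" "\<forall>x. p x \<ge> 0"
  shows "c \<noteq> 0 \<Longrightarrow> is_sos n (\<lambda>x. c * Defs.monom n \<alpha> x * p x) \<Longrightarrow> is_sos n p"
proof (induction "\<Sum>i<n. \<alpha> i" arbitrary: \<alpha> c rule: less_induct)
  case less
  note c = less.prems(1) and sos = less.prems(2)
  show ?case
  proof (cases "\<exists>i<n. \<alpha> i \<ge> 1")
    case False
    then have m1: "Defs.monom n \<alpha> x = 1" for x unfolding Defs.monom_def by (auto intro!: prod.neutral simp: not_less_eq_eq)
    show ?thesis
    proof (cases "\<forall>x. p x = 0")
      case True then have "p = (\<lambda>x. 0)" by auto
      then show ?thesis using sos_zero by simp
    next
      case False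
      then obtain x0 where "p x0 \<noteq> 0" by auto
      then have px0: "p x0 > 0" using p(2) by (simp add: order_less_le)
      have "c * p x0 \<ge> 0" using sos_nonneg[OF sos, of x0] m1 by simp
      then have cpos: "c > 0" using c px0 by (simp add: zero_le_mult_iff)
      have "is_sos n (\<lambda>x. (1/c) * (c * Defs.monom n \<alpha> x * p x))" by (rule sos_scale[OF sos]) (use cpos in simp)
      moreover have "(\<lambda>x. (1/c) * (c * Defs.monom n \<alpha> x * p x)) = p" using cpos m1 by auto
      ultimately show ?thesis by simp
    qed
  next
    case True
    then obtain i where i: "i < n" "\<alpha> i \<ge> 1" by auto
    obtain gs where gs: "\<forall>g\<in>set gs. is_poly n g" "(\<lambda>x. c * Defs.monom n \<alpha> x * p x) = (\<lambda>x. \<Sum>g\<leftarrow>gs. (g x)^2)"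
      using sos unfolding is_sos_def by blast
    have mz: "Defs.monom n \<alpha> x = 0" if "x i = 0" for x using monom_split[of i n \<alpha> x, OF i] that by simp
    have gz: "g x = 0" if "g \<in> set gs" "x i = 0" for g x
    proof -
      have "(\<Sum>g\<leftarrow>gs. (g x)^2) = 0" using fun_cong[OF gs(2), of x] mz[of x, OF that(2)] by simp
      moreover have "(g x)^2 \<le> (\<Sum>g\<leftarrow>gs. (g x)^2)" using that(1) by (intro member_le_sum_list) auto
      ultimately show ?thesis by simp
    qed
    define dv where "dv g = (SOME g'. is_poly n g' \<and> (\<forall>x. g x = x i * g' x))" for g
    have dv: "is_poly n (dv g) \<and> (\<forall>x. g x = x i * dv g x)" if "g \<in> set gs" for g
    proof -
      have "\<exists>g'. is_poly n g' \<and> (\<forall>x. g x = x i * g' x)"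
        using div_var[of n g i] gs(1) that i gz by blast
      then show ?thesis unfolding dv_def by (rule someI_ex)
    qed
    define S' where "S' x = (\<Sum>g\<leftarrow>gs. (dv g x)^2)" for x
    have S'eq: "S' = (\<lambda>x. \<Sum>g\<leftarrow>map dv gs. (g x)^2)" unfolding S'_def by (simp add: o_def)
    have S'sos: "is_sos n S'" unfolding is_sos_def S'eq using dv by (intro exI[of _ "map dv gs"]) auto
    have S'poly: "is_poly n S'" unfolding S'eq using dv by (intro is_poly_sum_list) auto
    have S'nn: "S' y \<ge> 0" for y using sos_nonneg[OF S'sos] .
    have key: "c * Defs.monom n \<alpha> x * p x = (x i)^2 * S' x" for x
    proof -
      have "c * Defs.monom n \<alpha> x * p x = (\<Sum>g\<leftarrow>gs. (g x)^2)" using fun_cong[OF gs(2), of x] by simp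
      also have "\<dots> = (\<Sum>g\<leftarrow>gs. (x i * dv g x)^2)"
        using dv by (intro arg_cong[where f=sum_list] map_cong refl) auto
      also have "\<dots> = (x i)^2 * S' x" unfolding S'_def by (rule sum_list_sq_scale)
      finally show ?thesis .
    qed
    show ?thesis
    proof (cases "\<alpha> i \<ge> 2")
      case True
      define \<beta> where "\<beta> = \<alpha>(i := \<alpha> i - 2)"
      have m\<beta>: "Defs.monom n \<alpha> x = (x i)^2 * Defs.monom n \<beta> x" for x
      proof -
        define \<alpha>1 where "\<alpha>1 = \<alpha>(i := \<alpha> i - 1)"
        have "\<alpha>1 i \<ge> 1" unfolding \<alpha>1_def using True by simp
        have b: "\<alpha>1(i := \<alpha>1 i - 1) = \<beta>" unfolding \<alpha>1_def \<beta>_def by (simp add: numeral_2_eq_2)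
        have "Defs.monom n \<alpha> x = x i * Defs.monom n \<alpha>1 x" unfolding \<alpha>1_def by (rule monom_split[of i n \<alpha>, OF i])
        also have "Defs.monom n \<alpha>1 x = x i * Defs.monom n \<beta> x"
          using monom_split[of i n \<alpha>1 x, OF i(1) \<open>\<alpha>1 i \<ge> 1\<close>] b by simp
        finally show ?thesis by (simp add: power2_eq_square)
      qed
      have eq: "c * Defs.monom n \<beta> x * p x = S' x" for x
      proof (rule zero_ext[of n "\<lambda>x. c * Defs.monom n \<beta> x * p x - S' x" "{i}", simplified])
        show "linepoly n (\<lambda>x. c * Defs.monom n \<beta> x * p x - S' x)"
          by (intro is_poly_lp is_poly_diff is_poly_mult is_poly_scale is_poly_monom p(1) S'poly)
        show "i < n" by (rule i)
        fix y :: "nat \<Rightarrow> real" assume y: "y i \<noteq> 0"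
        have "(y i)^2 * (c * Defs.monom n \<beta> y * p y) = (y i)^2 * S' y"
          using key[of y] m\<beta>[of y] by (simp add: ac_simps)
        then show "c * Defs.monom n \<beta> y * p y = S' y" using y by simp
      qed
      have lt: "(\<Sum>j<n. \<beta> j) < (\<Sum>j<n. \<alpha> j)"
      proof -
        have "(\<Sum>j<n. \<beta> j) = \<beta> i + (\<Sum>j\<in>{..<n}-{i}. \<beta> j)" using i(1) by (subst sum.remove[of _ i]) auto
        also have "(\<Sum>j\<in>{..<n}-{i}. \<beta> j) = (\<Sum>j\<in>{..<n}-{i}. \<alpha> j)" unfolding \<beta>_def by (intro sum.cong) auto
        also have "(\<Sum>j<n. \<alpha> j) = \<alpha> i + (\<Sum>j\<in>{..<n}-{i}. \<alpha> j)" using i(1) by (subst sum.remove[of _ i]) auto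
        moreover have "\<beta> i < \<alpha> i" unfolding \<beta>_def using True by simp
        ultimately show ?thesis by linarith
      qed
      have "is_sos n (\<lambda>x. c * Defs.monom n \<beta> x * p x)" using S'sos eq by (simp add: fun_eq_iff[symmetric])
      then show ?thesis using less.hyps[OF lt c] by blast
    next
      case False
      then have a1: "\<alpha> i = 1" using i by auto
      define \<beta> where "\<beta> = \<alpha>(i := 0)"
      have m\<beta>: "Defs.monom n \<alpha> x = x i * Defs.monom n \<beta> x" for x
        using monom_split[of i n \<alpha> x, OF i] a1 unfolding \<beta>_def by simp
      define K where "K x = c * Defs.monom n \<beta> x" for x
      have Kind: "K (x(i:=t)) = K x" for x t unfolding K_def \<beta>_def using monom_indep[OF i(1)] by simp
      have eq: "K x * p x = x i * S' x" if "x i \<noteq> 0" for x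
      proof -
        have "x i * (K x * p x) = x i * (x i * S' x)"
          using key[of x] m\<beta>[of x] unfolding K_def by (simp add: power2_eq_square ac_simps)
        then show ?thesis using that by simp
      qed
      have pz: "p x = 0" if Kx: "K x \<noteq> 0" for x
      proof -
        obtain q where q: "\<And>t. p (x(i:=t)) = poly q t" using is_poly_lp[OF p(1)] i(1) unfolding linepoly_def by blast
        have rel: "K x * poly q t = t * S' (x(i:=t))" if "t \<noteq> 0" for t
          using eq[of "x(i:=t)"] that Kind[of x t] q[of t] by simp
        have pq: "poly q t \<ge> 0" for t
        proof -
          have "0 \<le> p (x(i:=t))" using p(2) by blast
          then show ?thesis by (simp only: q)
        qed
        have "q = 0"
        proof (cases "K x > 0")
          case True
          show ?thesis
          proof (rule poly_zero_inf[of "\<lambda>t. t < 0"])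
            fix t :: real assume t: "t < 0"
            have "t * S' (x(i:=t)) \<le> 0" using t S'nn[of "x(i:=t)"] by (simp add: mult_nonpos_nonneg)
            then have "K x * poly q t \<le> 0" using rel[of t] t by simp
            then have "poly q t \<le> 0" using True by (simp add: mult_le_0_iff)
            then show "poly q t = 0" using pq[of t] by simp
          qed (simp add: inf_neg)
        next
          case False
          then have Kneg: "K x < 0" using Kx by simp
          show ?thesis
          proof (rule poly_zero_inf[of "\<lambda>t. t > 0"])
            fix t :: real assume t: "t > 0"
            have "t * S' (x(i:=t)) \<ge> 0" using t S'nn[of "x(i:=t)"] by simp
            then have "K x * poly q t \<ge> 0" using rel[of t] t by simp
            then have "poly q t \<le> 0" using Kneg by (simp add: zero_le_mult_iff)
            then show "poly q t = 0" using pq[of t] by simp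
          qed (simp add: inf_pos)
        qed
        then show ?thesis using q[of "x i"] by simp
      qed
      have "p x = 0" for x
      proof (rule zero_ext[of n p "{j. j < n \<and> \<beta> j \<noteq> 0}"])
        show "linepoly n p" using is_poly_lp[OF p(1)] .
        show "finite {j. j < n \<and> \<beta> j \<noteq> 0}" by simp
        show "{j. j < n \<and> \<beta> j \<noteq> 0} \<subseteq> {..<n}" by auto
        fix y :: "nat \<Rightarrow> real" assume y: "\<forall>j\<in>{j. j < n \<and> \<beta> j \<noteq> 0}. y j \<noteq> 0"
        have "Defs.monom n \<beta> y \<noteq> 0" unfolding Defs.monom_def using y by (auto simp: prod_zero_iff)
        then have "K y \<noteq> 0" unfolding K_def using c by simp
        then show "p y = 0" by (rule pz)
      qed
      then have "p = (\<lambda>x. 0)" by auto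
      then show ?thesis using sos_zero by simp
    qed
  qed
qed

lemma digits_bound: "(\<forall>j<n. \<alpha> j < B) \<Longrightarrow> (\<Sum>j<n. B ^ j * \<alpha> j) < (B::nat) ^ n"
proof (induction n)
  case 0 then show ?case by simp
next
  case (Suc n)
  then have IH: "(\<Sum>j<n. B ^ j * \<alpha> j) < B ^ n" by simp
  have a: "\<alpha> n < B" using Suc.prems by simp
  then have "\<alpha> n + 1 \<le> B" by simp
  have "(\<Sum>j<Suc n. B ^ j * \<alpha> j) = (\<Sum>j<n. B ^ j * \<alpha> j) + B ^ n * \<alpha> n" by simp
  also have "\<dots> < B ^ n + B ^ n * \<alpha> n" using IH by simp
  also have "\<dots> = B ^ n * (\<alpha> n + 1)" by (simp add: algebra_simps)
  also have "\<dots> \<le> B ^ n * B" using \<open>\<alpha> n + 1 \<le> B\<close> by (intro mult_left_mono) auto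
  also have "\<dots> = B ^ Suc n" by (simp add: mult.commute)
  finally show ?case .
qed

lemma digits_inj: "(\<forall>j<n. \<alpha> j < B \<and> \<beta> j < B) \<Longrightarrow> (\<Sum>j<n. B ^ j * \<alpha> j) = (\<Sum>j<n. (B::nat) ^ j * \<beta> j) \<Longrightarrow> \<forall>j<n. \<alpha> j = \<beta> j"
proof (induction n)
  case 0 then show ?case by simp
next
  case (Suc n)
  define Sa where "Sa = (\<Sum>j<n. B ^ j * \<alpha> j)"
  define Sb where "Sb = (\<Sum>j<n. B ^ j * \<beta> j)"
  have ba: "Sa < B ^ n" unfolding Sa_def using Suc.prems(1) by (intro digits_bound) auto
  have bb: "Sb < B ^ n" unfolding Sb_def using Suc.prems(1) by (intro digits_bound) auto
  have eq: "Sa + \<alpha> n * B ^ n = Sb + \<beta> n * B ^ n" using Suc.prems(2) unfolding Sa_def Sb_def by (simp add: mult.commute)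
  have Bn: "B ^ n > 0" using ba by linarith
  have "\<alpha> n = (Sa + \<alpha> n * B ^ n) div B ^ n" using ba Bn by simp
  also have "\<dots> = (Sb + \<beta> n * B ^ n) div B ^ n" by (simp only: eq)
  also have "\<dots> = \<beta> n" using bb Bn by simp
  finally have an: "\<alpha> n = \<beta> n" .
  have "Sa = (Sa + \<alpha> n * B ^ n) mod B ^ n" using ba by simp
  also have "\<dots> = (Sb + \<beta> n * B ^ n) mod B ^ n" by (simp only: eq)
  also have "\<dots> = Sb" using bb by simp
  finally have "Sa = Sb" .
  moreover have "\<forall>j<n. \<alpha> j < B \<and> \<beta> j < B" using Suc.prems(1) by simp
  ultimately have "\<forall>j<n. \<alpha> j = \<beta> j" using Suc.IH unfolding Sa_def Sb_def by blast
  then show ?case using an by (auto simp: less_Suc_eq)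
qed


lemma sos_comp_scale: "is_sos n f \<Longrightarrow> is_sos n (\<lambda>x. f (\<lambda>j. a j * x j))"
proof -
  assume "is_sos n f"
  then obtain gs where gs: "\<forall>g\<in>set gs. is_poly n g" "f = (\<lambda>x. \<Sum>g\<leftarrow>gs. (g x)^2)"
    unfolding is_sos_def by blast
  define hs where "hs = map (\<lambda>g x. g (\<lambda>j. a j * x j)) gs"
  have "\<forall>h\<in>set hs. is_poly n h" unfolding hs_def using gs(1) by (auto intro: is_poly_comp_scale)
  moreover have "(\<lambda>x. f (\<lambda>j. a j * x j)) = (\<lambda>x. \<Sum>h\<leftarrow>hs. (h x)^2)"
    unfolding hs_def gs(2) by (simp add: o_def)
  ultimately show ?thesis unfolding is_sos_def by blast
qed

lemma form_comp_scale: "is_form n d f \<Longrightarrow> is_form n d (\<lambda>x. f (\<lambda>j. a j * x j))"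
  unfolding is_form_def
  apply (elim exE conjE)
  subgoal for A c by (rule exI[of _ A], rule exI[of _ "\<lambda>\<alpha>. c \<alpha> * (\<Prod>i<n. a i ^ \<alpha> i)"]) (auto simp: monom_scale mult.assoc)
  done

lemma degen:
  fixes B :: nat
  assumes hp: "polyb n d h" and hnz: "h \<noteq> (\<lambda>x. 0)" and dB: "d < B"
  shows "\<exists>c \<alpha> \<mu>. c \<noteq> 0 \<and> (\<forall>u x. (\<forall>k. u k > 0) \<longrightarrow> u \<longlonglongrightarrow> 0 \<longrightarrow>
      ((\<lambda>k. h (\<lambda>j. u k ^ (B^j) * x j) / u k ^ \<mu>) \<longlonglongrightarrow> c * Defs.monom n \<alpha> x))"
proof -
  obtain A c0 where A: "finite A" "\<forall>\<alpha>\<in>A. \<alpha> \<in> exps n \<and> (\<forall>i. \<alpha> i \<le> d)" "h = (\<lambda>x. \<Sum>\<alpha>\<in>A. c0 \<alpha> * Defs.monom n \<alpha> x)"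
    using hp unfolding polyb_def by blast
  define A' where "A' = {\<alpha>\<in>A. c0 \<alpha> \<noteq> 0}"
  have fA': "finite A'" using A(1) unfolding A'_def by simp
  have hA': "h x = (\<Sum>\<alpha>\<in>A'. c0 \<alpha> * Defs.monom n \<alpha> x)" for x
    unfolding A(3) A'_def by (subst sum.inter_filter[OF A(1)]) (auto intro!: sum.cong)
  have ne: "A' \<noteq> {}"
  proof
    assume "A' = {}"
    then have "h = (\<lambda>x. 0)" using hA' by auto
    then show False using hnz by simp
  qed
  define wt where "wt \<alpha> = (\<Sum>j<n. B ^ j * \<alpha> j)" for \<alpha> :: "nat \<Rightarrow> nat"
  have inj: "inj_on wt A'"
  proof (rule inj_onI)
    fix \<alpha> \<beta> assume ab: "\<alpha> \<in> A'" "\<beta> \<in> A'" "wt \<alpha> = wt \<beta>"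
    have "\<forall>j<n. \<alpha> j < B \<and> \<beta> j < B" using A(2) ab(1,2) dB unfolding A'_def by (auto intro: le_less_trans)
    then have lt: "\<forall>j<n. \<alpha> j = \<beta> j" using digits_inj ab(3) unfolding wt_def by blast
    have ge: "\<alpha> j = 0 \<and> \<beta> j = 0" if "j \<ge> n" for j using A(2) ab(1,2) that unfolding A'_def exps_def by auto
    show "\<alpha> = \<beta>"
    proof
      fix j show "\<alpha> j = \<beta> j" using lt ge by (cases "j < n") auto
    qed
  qed
  define \<mu> where "\<mu> = Min (wt ` A')"
  have "\<mu> \<in> wt ` A'" unfolding \<mu>_def using fA' ne by (intro Min_in) auto
  then obtain \<alpha>0 where \<alpha>0: "\<alpha>0 \<in> A'" "wt \<alpha>0 = \<mu>" by auto
  have ge: "\<mu> \<le> wt \<alpha>" if "\<alpha> \<in> A'" for \<alpha> unfolding \<mu>_def using fA' that by (intro Min_le) auto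
  have gt: "wt \<alpha> > \<mu>" if "\<alpha> \<in> A'" "\<alpha> \<noteq> \<alpha>0" for \<alpha>
  proof -
    have "wt \<alpha> \<noteq> wt \<alpha>0" using inj that \<alpha>0(1) by (meson inj_onD)
    then show ?thesis using ge[OF that(1)] \<alpha>0(2) by linarith
  qed
  have c0: "c0 \<alpha>0 \<noteq> 0" using \<alpha>0(1) unfolding A'_def by simp
  have scale: "h (\<lambda>j. t ^ (B^j) * x j) / t ^ \<mu> = (\<Sum>\<alpha>\<in>A'. c0 \<alpha> * t ^ (wt \<alpha> - \<mu>) * Defs.monom n \<alpha> x)"
    if "t > 0" for t :: real and x
  proof -
    have pw: "(\<Prod>i<n. (t ^ (B^i)) ^ \<alpha> i) = t ^ wt \<alpha>" for \<alpha>
      unfolding wt_def power_sum by (simp add: power_mult)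
    have "h (\<lambda>j. t ^ (B^j) * x j) = (\<Sum>\<alpha>\<in>A'. c0 \<alpha> * (t ^ wt \<alpha> * Defs.monom n \<alpha> x))"
      unfolding hA' monom_scale pw ..
    also have "\<dots> / t ^ \<mu> = (\<Sum>\<alpha>\<in>A'. c0 \<alpha> * t ^ (wt \<alpha> - \<mu>) * Defs.monom n \<alpha> x)"
      unfolding sum_divide_distrib
    proof (intro sum.cong refl)
      fix \<alpha> assume "\<alpha> \<in> A'"
      then have "t ^ (wt \<alpha> - \<mu>) = t ^ wt \<alpha> / t ^ \<mu>" using that ge by (intro power_diff) auto
      then show "c0 \<alpha> * (t ^ wt \<alpha> * Defs.monom n \<alpha> x) / t ^ \<mu> = c0 \<alpha> * t ^ (wt \<alpha> - \<mu>) * Defs.monom n \<alpha> x"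
        by simp
    qed
    finally show ?thesis .
  qed
  show ?thesis
  proof (intro exI[of _ "c0 \<alpha>0"] exI[of _ \<alpha>0] exI[of _ \<mu>] conjI allI impI c0)
    fix u :: "nat \<Rightarrow> real" and x assume upos: "\<forall>k. u k > 0" and u0: "u \<longlonglongrightarrow> 0"
    have "(\<lambda>k. \<Sum>\<alpha>\<in>A'. c0 \<alpha> * u k ^ (wt \<alpha> - \<mu>) * Defs.monom n \<alpha> x) \<longlonglongrightarrow>
        (\<Sum>\<alpha>\<in>A'. c0 \<alpha> * 0 ^ (wt \<alpha> - \<mu>) * Defs.monom n \<alpha> x)"
      by (intro tendsto_intros u0)
    also have "(\<Sum>\<alpha>\<in>A'. c0 \<alpha> * 0 ^ (wt \<alpha> - \<mu>) * Defs.monom n \<alpha> x) = c0 \<alpha>0 * Defs.monom n \<alpha>0 x"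
    proof -
      have "(\<Sum>\<alpha>\<in>A'. c0 \<alpha> * 0 ^ (wt \<alpha> - \<mu>) * Defs.monom n \<alpha> x) =
          (\<Sum>\<alpha>\<in>A'. if \<alpha> = \<alpha>0 then c0 \<alpha>0 * Defs.monom n \<alpha>0 x else 0)"
      proof (intro sum.cong refl)
        fix \<alpha> assume a: "\<alpha> \<in> A'"
        show "c0 \<alpha> * 0 ^ (wt \<alpha> - \<mu>) * Defs.monom n \<alpha> x = (if \<alpha> = \<alpha>0 then c0 \<alpha>0 * Defs.monom n \<alpha>0 x else 0)"
        proof (cases "\<alpha> = \<alpha>0")
          case True then show ?thesis using \<alpha>0(2) by simp
        next
          case False then have "wt \<alpha> - \<mu> \<noteq> 0" using gt[OF a] by simp
          then show ?thesis using False by simp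
        qed
      qed
      also have "\<dots> = c0 \<alpha>0 * Defs.monom n \<alpha>0 x" using \<alpha>0(1) fA' by simp
      finally show ?thesis .
    qed
    finally have "(\<lambda>k. \<Sum>\<alpha>\<in>A'. c0 \<alpha> * u k ^ (wt \<alpha> - \<mu>) * Defs.monom n \<alpha> x) \<longlonglongrightarrow> c0 \<alpha>0 * Defs.monom n \<alpha>0 x" .
    moreover have "(\<lambda>k. h (\<lambda>j. u k ^ (B^j) * x j) / u k ^ \<mu>) = (\<lambda>k. \<Sum>\<alpha>\<in>A'. c0 \<alpha> * u k ^ (wt \<alpha> - \<mu>) * Defs.monom n \<alpha> x)"
      using scale upos by auto
    ultimately show "(\<lambda>k. h (\<lambda>j. u k ^ (B^j) * x j) / u k ^ \<mu>) \<longlonglongrightarrow> c0 \<alpha>0 * Defs.monom n \<alpha>0 x" by simp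
  qed
qed

theorem corollary2:
  fixes n m :: nat
  assumes "n \<ge> 1" and "m > 0" and "even m" and "Delta_set n m \<noteq> {}"
  shows "\<not> (\<exists>H. finite H \<and>
              (\<forall>h\<in>H. (\<exists>d. is_form n d h) \<and> h \<noteq> (\<lambda>x. 0)) \<and>
              (\<forall>p\<in>P_set n m. \<exists>h\<in>H. is_sos n (\<lambda>x. h x * p x)))"
proof
  assume "\<exists>H. finite H \<and> (\<forall>h\<in>H. (\<exists>d. is_form n d h) \<and> h \<noteq> (\<lambda>x. 0)) \<and>
              (\<forall>p\<in>P_set n m. \<exists>h\<in>H. is_sos n (\<lambda>x. h x * p x))"
  then obtain H where H: "finite H" "\<forall>h\<in>H. (\<exists>d. is_form n d h) \<and> h \<noteq> (\<lambda>x. 0)"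
      "\<forall>p\<in>P_set n m. \<exists>h\<in>H. is_sos n (\<lambda>x. h x * p x)" by blast
  obtain p0 where "p0 \<in> Delta_set n m" using assms(4) by blast
  then have p0f: "is_form n m p0" "\<forall>x. p0 x \<ge> 0" "\<not> is_sos n p0"
    unfolding Delta_set_def P_set_def Sigma_set_def by auto
  have p0poly: "is_poly n p0" using form_polyb[OF p0f(1)] is_poly_iff by blast
  define dg where "dg h = (SOME d. is_form n d h)" for h
  have dg: "is_form n (dg h) h" if "h \<in> H" for h
    using H(2) that unfolding dg_def by (meson someI_ex)
  define B where "B = Suc (\<Sum>h\<in>H. dg h)"
  have dB: "dg h < B" if "h \<in> H" for h
    unfolding B_def using H(1) that by (simp add: le_imp_less_Suc member_le_sum)
  define u where "u k = inverse (real (Suc k))" for k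
  have upos: "u k > 0" for k unfolding u_def by simp
  define sc where "sc k = (\<lambda>j::nat. u k ^ (B^j))" for k
  have scpos: "sc k j > 0" for k j unfolding sc_def using upos by simp
  define q where "q k = (\<lambda>x. p0 (\<lambda>j. inverse (sc k j) * x j))" for k
  have qP: "q k \<in> P_set n m" for k
    unfolding P_set_def q_def using p0f(1,2) by (auto intro: form_comp_scale)
  have "\<forall>k. \<exists>h. h \<in> H \<and> is_sos n (\<lambda>x. h x * q k x)" using H(3) qP by blast
  from choice[OF this] obtain hk where hk: "\<forall>k. hk k \<in> H \<and> is_sos n (\<lambda>x. hk k x * q k x)" by blast
  have "\<exists>h\<in>H. infinite {k. hk k = h}"
  proof (rule ccontr)
    assume "\<not> (\<exists>h\<in>H. infinite {k. hk k = h})"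
    then have "finite (\<Union>h\<in>H. {k. hk k = h})" using H(1) by blast
    moreover have "(\<Union>h\<in>H. {k. hk k = h}) = UNIV" using hk by auto
    ultimately show False by simp
  qed
  then obtain h where h: "h \<in> H" "infinite {k. hk k = h}" by blast
  define r where "r = enumerate {k. hk k = h}"
  have r1: "strict_mono r" unfolding r_def strict_mono_def using enumerate_mono h(2) by blast
  have r2: "hk (r k) = h" for k unfolding r_def using enumerate_in_set[OF h(2)] by blast
  have hnz: "h \<noteq> (\<lambda>x. 0)" using H(2) h(1) by blast
  obtain c \<alpha> \<mu> where c\<alpha>\<mu>: "c \<noteq> 0" "\<forall>u x. (\<forall>k. u k > 0) \<longrightarrow> u \<longlonglongrightarrow> 0 \<longrightarrow>
      ((\<lambda>k. h (\<lambda>j. u k ^ (B^j) * x j) / u k ^ \<mu>) \<longlonglongrightarrow> c * Defs.monom n \<alpha> x)"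
    using degen[OF form_polyb[OF dg[OF h(1)]] hnz dB[OF h(1)]] by auto
  define F where "F k = (\<lambda>x. inverse (u (r k) ^ \<mu>) * (h (\<lambda>j. sc (r k) j * x j) * p0 x))" for k
  have Fsos: "is_sos n (F k)" for k
  proof -
    have "is_sos n (\<lambda>x. hk (r k) x * q (r k) x)" using hk by blast
    then have "is_sos n (\<lambda>x. h x * q (r k) x)" using r2[of k] by simp
    then have "is_sos n (\<lambda>x. (\<lambda>x. h x * q (r k) x) (\<lambda>j. sc (r k) j * x j))" by (rule sos_comp_scale)
    moreover have "(\<lambda>x. (\<lambda>x. h x * q (r k) x) (\<lambda>j. sc (r k) j * x j)) = (\<lambda>x. h (\<lambda>j. sc (r k) j * x j) * p0 x)"
    proof
      fix x
      have "(\<lambda>j. inverse (sc (r k) j) * (sc (r k) j * x j)) = x"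
      proof
        fix j show "inverse (sc (r k) j) * (sc (r k) j * x j) = x j"
          using scpos[of "r k" j] by (simp add: field_simps)
      qed
      then show "(\<lambda>x. h x * q (r k) x) (\<lambda>j. sc (r k) j * x j) = h (\<lambda>j. sc (r k) j * x j) * p0 x"
        unfolding q_def by simp
    qed
    ultimately have "is_sos n (\<lambda>x. h (\<lambda>j. sc (r k) j * x j) * p0 x)" by simp
    then show ?thesis unfolding F_def by (rule sos_scale) (simp add: upos less_imp_le)
  qed
  have Fld: "linedeg n (dg h + m) (F k)" for k
  proof -
    have "polyb n (dg h) (\<lambda>x. h (\<lambda>j. sc (r k) j * x j))"
      by (rule polyb_comp_scale[OF form_polyb[OF dg[OF h(1)]]])
    then have "polyb n (dg h + m) (\<lambda>x. h (\<lambda>j. sc (r k) j * x j) * p0 x)"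
      by (rule polyb_mult[OF _ form_polyb[OF p0f(1)]])
    then have "polyb n (dg h + m) (F k)" unfolding F_def by (rule polyb_scale)
    then show ?thesis by (rule polyb_linedeg)
  qed
  have Flim: "(\<lambda>k. F k x) \<longlonglongrightarrow> c * Defs.monom n \<alpha> x * p0 x" for x
  proof -
    have "(u \<circ> r) \<longlonglongrightarrow> 0" unfolding u_def using LIMSEQ_subseq_LIMSEQ[OF LIMSEQ_inverse_real_of_nat r1] .
    then have "(\<lambda>k. u (r k)) \<longlonglongrightarrow> 0" by (simp add: o_def)
    then have "(\<lambda>k. h (\<lambda>j. u (r k) ^ (B^j) * x j) / u (r k) ^ \<mu>) \<longlonglongrightarrow> c * Defs.monom n \<alpha> x"
    proof -
      note i = spec[OF spec[OF c\<alpha>\<mu>(2), of "\<lambda>k. u (r k)"], of x]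
      have "\<forall>k. 0 < u (r k)" using upos by simp
      with i show ?thesis using \<open>(\<lambda>k. u (r k)) \<longlonglongrightarrow> 0\<close> by blast
    qed
    then have "(\<lambda>k. h (\<lambda>j. u (r k) ^ (B^j) * x j) / u (r k) ^ \<mu> * p0 x) \<longlonglongrightarrow> c * Defs.monom n \<alpha> x * p0 x"
      by (rule tendsto_mult_right)
    moreover have "(\<lambda>k. h (\<lambda>j. u (r k) ^ (B^j) * x j) / u (r k) ^ \<mu> * p0 x) = (\<lambda>k. F k x)"
      unfolding F_def sc_def by (simp add: divide_inverse ac_simps)
    ultimately show ?thesis by simp
  qed
  have "is_sos n (\<lambda>x. c * Defs.monom n \<alpha> x * p0 x)" by (rule sos_limit[OF Fsos Fld Flim])
  then have "is_sos n p0" by (rule mono_div_sos[OF p0poly p0f(2) c\<alpha>\<mu>(1)])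
  with p0f(3) show False by simp
qed

end
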